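(* With the notation below, let $f,g\in\mathcal K(C_p)$ be real-valued. (i) $\|f\vee g\|_p\leq\max\{\|f\|_p,\|g\|_p\}$. (ii) $\|f+g\|_p\leq\max\{\|f\|_p,\|g\|_p\}$. (iii) $\|p^af\|_p=p^{-a}\|f\|_p$ for $a\in\mathbb{Z}$. (iv) $\|f\|_p\leq1$ if and only if the restriction of $f$ to $[1,p]$ has integral slopes. (v) For $D\in\mathrm{Div}(C_p)$, the sets $H^0(D)^\rho=\{f\in H^0(D)\mid\|f\|_p\leq\rho\}$ ($\rho>0$) form an increasing filtration of $H^0(D)$ by $\mathbb{R}_{\max}$-submodules.
   Context: Let $p$ be a prime, $H_p=\mathbb{Z}[1/p]$, $|\cdot|_p$ the $p$-adic absolute value on $H_p$ normalized by $|p|_p=1/p$. $C_p$ is the set of subgroups $H=\lambda H_p\subset\mathbb{R}$, $\lambda>0$. $\mathcal K(C_p)$: continuous piecewise affine $f:(0,\infty)\to\mathbb{R}$ with slopes in $H_p$ and $f(p\lambda)=f(\lambda)$, plus the constant $-\infty$; it is a semifield for $\vee=\max$ and $+$, and an $\mathbb{R}_{\max}$-module ($\mathbb{R}_{\max}=\mathbb{R}\cup\{-\infty\}$ with operations max and $+$) via $\vee$ and addition of constants. For real-valued $f$, $\|f\|_p=\max\{|h|_p/\lambda\}$ over $\lambda\in(0,\infty)$ and $h$ ranging over the left and right slopes of $f$ at $\lambda$. Divisors: maps $D$ with $D(H)\in H$ for $H\in C_p$, zero for all but finitely many $H$, ordered pointwise; principal divisor $(f)(H)=h_+-h_-$ for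 $H=\lambda H_p$, with $h_\pm=\lim_{\epsilon\to0\pm}(f((1+\epsilon)\lambda)-f(\lambda))/\epsilon$. $H^0(D)=\{f\in\mathcal K(C_p)\text{ real-valued}\mid D+(f)\geq0\}\cup\{-\infty\}$, the element $-\infty$ being included in every $H^0(D)^\rho$. *)

theory Defs
  imports "HOL-Analysis.Analysis"
begin

definition Hp :: "nat \<Rightarrow> real set" where
  "Hp p = {x. \<exists>m::int. \<exists>k::nat. x = of_int m / real p ^ k}"

definition padic_abs :: "nat \<Rightarrow> real \<Rightarrow> real" where
  "padic_abs p x = (if x = 0 then 0 else
     real p powi (- (THE v::int. \<exists>m::int. \<not> int p dvd m \<and> x = of_int m * real p powi v)))"

text \<open>Values at non-positive arguments are irrelevant.\<close>
definition K_real :: "nat \<Rightarrow> (real \<Rightarrow> real) \<Rightarrow> bool" where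
  "K_real p f \<longleftrightarrow>
     continuous_on {0<..} f \<and>
     (\<forall>x>0. f (real p * x) = f x) \<and>
     (\<forall>a b. 0 < a \<longrightarrow> a < b \<longrightarrow>
        (\<exists>S::real set. finite S \<and> a \<in> S \<and> b \<in> S \<and> S \<subseteq> {a..b} \<and>
           (\<forall>u\<in>S. \<forall>v\<in>S. u < v \<longrightarrow> {u<..<v} \<inter> S = {} \<longrightarrow>
              (\<exists>s\<in>Hp p. \<exists>c. \<forall>t\<in>{u..v}. f t = s * t + c))))"

definition slopes :: "(real \<Rightarrow> real) \<Rightarrow> real \<Rightarrow> real set" where
  "slopes f x = {h. (f has_real_derivative h) (at_left x) \<or> (f has_real_derivative h) (at_right x)}"

definition left_slopes :: "(real \<Rightarrow> real) \<Rightarrow> real \<Rightarrow> real set" where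
  "left_slopes f x = {h. (f has_real_derivative h) (at_left x)}"

definition right_slopes :: "(real \<Rightarrow> real) \<Rightarrow> real \<Rightarrow> real set" where
  "right_slopes f x = {h. (f has_real_derivative h) (at_right x)}"

definition pnorm :: "nat \<Rightarrow> (real \<Rightarrow> real) \<Rightarrow> real" where
  "pnorm p f = Sup {padic_abs p h / x | x h. 0 < x \<and> h \<in> slopes f x}"

definition Cp :: "nat \<Rightarrow> real set set" where
  "Cp p = {(\<lambda>y. l * y) ` Hp p | l. 0 < l}"

definition Div :: "nat \<Rightarrow> (real set \<Rightarrow> real) set" where
  "Div p = {D. (\<forall>H\<in>Cp p. D H \<in> H) \<and> finite {H\<in>Cp p. D H \<noteq> 0} \<and> (\<forall>H. H \<notin> Cp p \<longrightarrow> D H = 0)}"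

definition hplus :: "(real \<Rightarrow> real) \<Rightarrow> real \<Rightarrow> real" where
  "hplus f l = Lim (at_right 0) (\<lambda>e. (f ((1 + e) * l) - f l) / e)"

definition hminus :: "(real \<Rightarrow> real) \<Rightarrow> real \<Rightarrow> real" where
  "hminus f l = Lim (at_left 0) (\<lambda>e. (f ((1 + e) * l) - f l) / e)"

definition pdiv :: "nat \<Rightarrow> (real \<Rightarrow> real) \<Rightarrow> real set \<Rightarrow> real" where
  "pdiv p f H = (if H \<in> Cp p then
      (let l = (SOME l. 0 < l \<and> H = (\<lambda>y. l * y) ` Hp p) in hplus f l - hminus f l)
    else 0)"

text \<open>Elements of K(C_p): None stands for the constant -oo, Some f for a real-valued f.
  R_max = real option, None = -oo.\<close>
type_synonym Kelem = "(real \<Rightarrow> real) option"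

fun Ksup :: "Kelem \<Rightarrow> Kelem \<Rightarrow> Kelem" where
  "Ksup None y = y"
| "Ksup x None = x"
| "Ksup (Some f) (Some g) = Some (\<lambda>x. max (f x) (g x))"

fun Ksmult :: "real option \<Rightarrow> Kelem \<Rightarrow> Kelem" where
  "Ksmult None _ = None"
| "Ksmult _ None = None"
| "Ksmult (Some c) (Some f) = Some (\<lambda>x. f x + c)"

definition H0 :: "nat \<Rightarrow> (real set \<Rightarrow> real) \<Rightarrow> Kelem set" where
  "H0 p D = insert None {Some f | f. K_real p f \<and> (\<forall>H\<in>Cp p. D H + pdiv p f H \<ge> 0)}"

definition H0rho :: "nat \<Rightarrow> (real set \<Rightarrow> real) \<Rightarrow> real \<Rightarrow> Kelem set" where
  "H0rho p D \<rho> = {x \<in> H0 p D. case x of None \<Rightarrow> True | Some f \<Rightarrow> pnorm p f \<le> \<rho>}"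

definition Rmax_submodule :: "Kelem set \<Rightarrow> bool" where
  "Rmax_submodule M \<longleftrightarrow> None \<in> M \<and> (\<forall>x\<in>M. \<forall>y\<in>M. Ksup x y \<in> M) \<and>
     (\<forall>c. \<forall>x\<in>M. Ksmult c x \<in> M)"

end

theory Submission
  imports Defs
begin


definition HP :: "nat \<Rightarrow> real set" where
  "HP p = {x. x = 0 \<or> (\<exists>m v. \<not> int p dvd m \<and> x = of_int m * real p powi v)}"

lemma p_gt1: "prime p \<Longrightarrow> real p > 1"
  using prime_gt_1_nat by auto

lemma int_factor:
  assumes pp: "prime p"
  shows "n \<noteq> (0::int) \<Longrightarrow> \<exists>j::nat. \<exists>m. \<not> int p dvd m \<and> n = int p ^ j * m"
proof (induction "nat \<bar>n\<bar>" arbitrary: n rule: less_induct)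
  case less
  show ?case
  proof (cases "int p dvd n")
    case True
    then obtain n' where n: "n = int p * n'" by blast
    have n0: "n' \<noteq> 0" using less.prems n by auto
    have p2: "int p \<ge> 2" using prime_ge_2_nat[OF pp] by linarith
    have "\<bar>n\<bar> = int p * \<bar>n'\<bar>" using n by (simp add: abs_mult)
    moreover have "\<bar>n'\<bar> \<ge> 1" using n0 by linarith
    moreover have "int p * \<bar>n'\<bar> \<ge> 2 * \<bar>n'\<bar>" using p2 by (intro mult_right_mono) auto
    ultimately have "\<bar>n'\<bar> < \<bar>n\<bar>" by linarith
    then have "nat \<bar>n'\<bar> < nat \<bar>n\<bar>" by simp
    then obtain j m where "\<not> int p dvd m" "n' = int p ^ j * m" using less.hyps n0 by blast
    then show ?thesis by (intro exI[of _ "Suc j"] exI[of _ m]) (simp add: n)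
  next
    case False
    then show ?thesis by (intro exI[of _ 0] exI[of _ n]) simp
  qed
qed

lemma pa_unique1:
  assumes pp: "prime p" and m: "\<not> int p dvd m" and m': "\<not> int p dvd m'"
    and e: "of_int m * real p powi v = of_int m' * real p powi v'" and le: "v \<le> v'"
  shows "v = v'"
proof (rule ccontr)
  assume ne: "v \<noteq> v'"
  define d where "d = nat (v' - v)"
  have d: "v' = v + int d" "d > 0" using le ne by (auto simp: d_def)
  have p0: "real p \<noteq> 0" using p_gt1[OF pp] by auto
  have "real p powi v' = real p powi v * real p ^ d"
    using d p0 by (simp add: power_int_add)
  with e have "of_int m * real p powi v = (of_int m' * real p ^ d) * real p powi v"
    by simp
  then have "real_of_int m = of_int m' * real p ^ d" using p0 by simp
  then have "real_of_int m = real_of_int (m' * int p ^ d)" by simp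
  then have mm: "m = m' * int p ^ d" by (simp only: of_int_eq_iff)
  have "int p dvd int p ^ d" by (rule dvd_power) (use d in auto)
  then have "int p dvd m' * int p ^ d" by (rule dvd_mult)
  then have "int p dvd m" using mm by simp
  with m show False by simp
qed

lemma pa_unique:
  assumes pp: "prime p" and m: "\<not> int p dvd m" and m': "\<not> int p dvd m'"
    and e: "of_int m * real p powi v = of_int m' * real p powi v'"
  shows "v = v'"
  using pa_unique1[OF pp m m' e] pa_unique1[OF pp m' m e[symmetric]] by linarith

lemma pa_exact:
  assumes pp: "prime p" and m: "\<not> int p dvd m"
  shows "padic_abs p (of_int m * real p powi v) = real p powi (- v)"
proof -
  have m0: "m \<noteq> 0" using m by auto
  have p0: "real p \<noteq> 0" using p_gt1[OF pp] by auto
  have x0: "of_int m * real p powi v \<noteq> 0" using m0 p0 by simp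
  have "(THE v'::int. \<exists>m'::int. \<not> int p dvd m' \<and> of_int m * real p powi v = of_int m' * real p powi v') = v"
    apply (rule the_equality)
    using m apply blast
    subgoal for y
    proof -
      assume "\<exists>m'::int. \<not> int p dvd m' \<and> of_int m * real p powi v = of_int m' * real p powi y"
      then obtain m' where h: "\<not> int p dvd m'" "of_int m * real p powi v = of_int m' * real p powi y" by blast
      show "y = v" using pa_unique[OF pp h(1) m h(2)[symmetric]] .
    qed
    done
  then show ?thesis using x0 unfolding padic_abs_def by simp
qed

lemma pa_nonneg: "prime p \<Longrightarrow> padic_abs p x \<ge> 0"
  using p_gt1[of p] unfolding padic_abs_def by auto

lemma pa_bound:
  assumes pp: "prime p" and n: "n \<noteq> 0"
  shows "padic_abs p (of_int n * real p powi v) \<le> real p powi (- v)"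
proof -
  obtain j m where jm: "\<not> int p dvd m" "n = int p ^ j * m" using int_factor[OF pp n] by blast
  have p0: "real p \<noteq> 0" using p_gt1[OF pp] by auto
  have "of_int n * real p powi v = of_int m * real p powi (v + int j)"
    using jm p0 by (simp add: power_int_add)
  then have "padic_abs p (of_int n * real p powi v) = real p powi (- v - int j)"
    using pa_exact[OF pp jm(1)] by simp
  also have "\<dots> \<le> real p powi (- v)"
    using p_gt1[OF pp] by (intro power_int_increasing) auto
  finally show ?thesis .
qed



lemma int_HP: "prime p \<Longrightarrow> real_of_int n \<in> HP p"
proof (cases "n = 0")
  case False
  assume pp: "prime p"
  obtain j m where jm: "\<not> int p dvd m" "n = int p ^ j * m" using int_factor[OF pp False] by blast
  then have "real_of_int n = of_int m * real p powi (int j)" by simp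
  then show ?thesis using jm(1) unfolding HP_def by blast
qed (simp add: HP_def)

lemma int_pa_le1:
  assumes pp: "prime p" shows "padic_abs p (real_of_int n) \<le> 1"
proof (cases "n = 0")
  case False
  have "padic_abs p (of_int n * real p powi 0) \<le> real p powi (- 0)"
    using pa_bound[OF pp False] by blast
  then show ?thesis by simp
qed (simp add: padic_abs_def)

lemma Hp_HP:
  assumes pp: "prime p" and x: "x \<in> Hp p" shows "x \<in> HP p"
proof -
  obtain m and k :: nat where xm: "x = of_int m / real p ^ k" using x unfolding Hp_def by blast
  show ?thesis
  proof (cases "m = 0")
    case True then show ?thesis using xm by (simp add: HP_def)
  next
    case False
    obtain j m' where jm: "\<not> int p dvd m'" "m = int p ^ j * m'" using int_factor[OF pp False] by blast
    have p0: "real p \<noteq> 0" using p_gt1[OF pp] by auto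
    have "real p powi (int j - int k) = real p ^ j / real p ^ k"
      using p0 by (simp add: power_int_diff)
    then have "x = of_int m' * real p powi (int j - int k)" using xm jm by simp
    then show ?thesis using jm(1) unfolding HP_def by blast
  qed
qed

lemma HP_mult:
  assumes pp: "prime p" and x: "x \<in> HP p"
  shows "x * real p powi k \<in> HP p \<and> padic_abs p (x * real p powi k) = real p powi (- k) * padic_abs p x"
proof (cases "x = 0")
  case True then show ?thesis by (simp add: HP_def padic_abs_def)
next
  case False
  then obtain m v where mv: "\<not> int p dvd m" "x = of_int m * real p powi v" using x unfolding HP_def by blast
  have p0: "real p \<noteq> 0" using p_gt1[OF pp] by auto
  have e: "x * real p powi k = of_int m * real p powi (v + k)"
    using mv p0 by (simp add: power_int_add)
  have "padic_abs p (x * real p powi k) = real p powi (- v - k)"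
    unfolding e using pa_exact[OF pp mv(1)] by simp
  also have "\<dots> = real p powi (- k + - v)" by (simp only: uminus_add_conv_diff)
  also have "\<dots> = real p powi (- k) * real p powi (- v)"
    using power_int_add[of "real p" "-k" "-v"] p0 by simp
  also have "\<dots> = real p powi (- k) * padic_abs p x"
    using pa_exact[OF pp mv(1)] mv(2) by simp
  finally show ?thesis using e mv(1) unfolding HP_def by blast
qed

lemma HP_int:
  assumes pp: "prime p" and x: "x \<in> HP p" and lt: "padic_abs p x < real p"
  shows "x \<in> \<int>"
proof (cases "x = 0")
  case True then show ?thesis by simp
next
  case False
  then obtain m v where mv: "\<not> int p dvd m" "x = of_int m * real p powi v" using x unfolding HP_def by blast
  have a: "padic_abs p x = real p powi (- v)" using pa_exact[OF pp mv(1)] mv(2) by simp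
  have v: "v \<ge> 0"
  proof (rule ccontr)
    assume "\<not> v \<ge> 0"
    then have "real p powi 1 \<le> real p powi (- v)"
      using p_gt1[OF pp] by (intro power_int_increasing) auto
    with a lt show False by simp
  qed
  then have "x = of_int (m * int p ^ nat v)"
    using mv(2) by (simp add: power_int_def)
  then show ?thesis by simp
qed

lemma pa_ultra:
  assumes pp: "prime p" and a: "a \<in> HP p" and b: "b \<in> HP p"
  shows "padic_abs p (a + b) \<le> max (padic_abs p a) (padic_abs p b)"
proof -
  have p0: "real p \<noteq> 0" using p_gt1[OF pp] by auto
  have main: "padic_abs p (of_int m1 * real p powi v1 + of_int m2 * real p powi v2) \<le> real p powi (- v1)"
    if "v1 \<le> v2" for m1 m2 :: int and v1 v2 :: int
  proof -
    define d where "d = nat (v2 - v1)"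
    have "v2 = v1 + int d" using that by (simp add: d_def)
    then have "real p powi v2 = real p powi v1 * real p ^ d"
      using p0 by (simp add: power_int_add)
    then have e: "of_int m1 * real p powi v1 + of_int m2 * real p powi v2
        = of_int (m1 + m2 * int p ^ d) * real p powi v1" by (simp add: algebra_simps)
    show ?thesis
    proof (cases "m1 + m2 * int p ^ d = 0")
      case True then show ?thesis unfolding e by (simp add: padic_abs_def)
    next
      case False then show ?thesis unfolding e using pa_bound[OF pp] by blast
    qed
  qed
  show ?thesis
  proof (cases "a = 0 \<or> b = 0")
    case True then show ?thesis using pa_nonneg[OF pp] by auto
  next
    case False
    then obtain m1 v1 m2 v2 where 1: "\<not> int p dvd m1" "a = of_int m1 * real p powi v1"
      and 2: "\<not> int p dvd m2" "b = of_int m2 * real p powi v2"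
      using a b unfolding HP_def by blast
    have pa: "padic_abs p a = real p powi (- v1)" "padic_abs p b = real p powi (- v2)"
      using pa_exact[OF pp 1(1)] pa_exact[OF pp 2(1)] 1(2) 2(2) by auto
    show ?thesis
    proof (cases "v1 \<le> v2")
      case True then show ?thesis using main[OF True, of m1 m2] 1 2 pa by auto
    next
      case False
      then have vv: "v2 \<le> v1" by simp
      show ?thesis using main[OF vv, of m2 m1] 1 2 pa by (auto simp: add.commute)
    qed
  qed
qed



definition Rg :: "(real \<Rightarrow> real) \<Rightarrow> real \<Rightarrow> real \<Rightarrow> bool" where
  "Rg f x s \<longleftrightarrow> (\<exists>d>0. \<forall>t\<in>{x..x+d}. f t = f x + s * (t - x))"

definition Lf :: "(real \<Rightarrow> real) \<Rightarrow> real \<Rightarrow> real \<Rightarrow> bool" where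
  "Lf f x s \<longleftrightarrow> (\<exists>d>0. \<forall>t\<in>{x-d..x}. f t = f x + s * (t - x))"

lemma locate_right:
  fixes S :: "real set"
  assumes "finite S" "a \<in> S" "b \<in> S" "a \<le> x" "x < b"
  shows "\<exists>u\<in>S. \<exists>v\<in>S. u \<le> x \<and> x < v \<and> {u<..<v} \<inter> S = {}"
proof -
  define U where "U = {s\<in>S. s \<le> x}"
  define V where "V = {s\<in>S. x < s}"
  have fU: "finite U" "U \<noteq> {}" using assms by (auto simp: U_def)
  have fV: "finite V" "V \<noteq> {}" using assms by (auto simp: V_def)
  define u where "u = Max U"
  define v where "v = Min V"
  have u: "u \<in> S" "u \<le> x" using Max_in[OF fU] by (auto simp: u_def U_def)
  have v: "v \<in> S" "x < v" using Min_in[OF fV] by (auto simp: v_def V_def)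
  have "{u<..<v} \<inter> S = {}"
  proof (rule ccontr)
    assume "{u<..<v} \<inter> S \<noteq> {}"
    then obtain w where w: "w \<in> S" "u < w" "w < v" by auto
    show False
    proof (cases "w \<le> x")
      case True
      then have "w \<in> U" using w by (auto simp: U_def)
      then have "w \<le> u" using fU unfolding u_def by simp
      with w show False by simp
    next
      case False
      then have "w \<in> V" using w by (auto simp: V_def)
      then have "v \<le> w" using fV unfolding v_def by simp
      with w show False by simp
    qed
  qed
  then show ?thesis using u v by blast
qed

lemma locate_left:
  fixes S :: "real set"
  assumes "finite S" "a \<in> S" "b \<in> S" "a < x" "x \<le> b"
  shows "\<exists>u\<in>S. \<exists>v\<in>S. u < x \<and> x \<le> v \<and> {u<..<v} \<inter> S = {}"
proof -
  define U where "U = {s\<in>S. s < x}"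
  define V where "V = {s\<in>S. x \<le> s}"
  have fU: "finite U" "U \<noteq> {}" using assms by (auto simp: U_def)
  have fV: "finite V" "V \<noteq> {}" using assms by (auto simp: V_def)
  define u where "u = Max U"
  define v where "v = Min V"
  have u: "u \<in> S" "u < x" using Max_in[OF fU] by (auto simp: u_def U_def)
  have v: "v \<in> S" "x \<le> v" using Min_in[OF fV] by (auto simp: v_def V_def)
  have "{u<..<v} \<inter> S = {}"
  proof (rule ccontr)
    assume "{u<..<v} \<inter> S \<noteq> {}"
    then obtain w where w: "w \<in> S" "u < w" "w < v" by auto
    show False
    proof (cases "w < x")
      case True
      then have "w \<in> U" using w by (auto simp: U_def)
      then have "w \<le> u" using fU unfolding u_def by simp
      with w show False by simp
    next
      case False
      then have "w \<in> V" using w by (auto simp: V_def)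
      then have "v \<le> w" using fV unfolding v_def by simp
      with w show False by simp
    qed
  qed
  then show ?thesis using u v by blast
qed

lemma K_piece_right:
  assumes K: "K_real p f" and ab: "0 < a" "a < b" and x: "a \<le> x" "x < b"
  shows "\<exists>u v s c. u \<le> x \<and> x < v \<and> a \<le> u \<and> v \<le> b \<and> s \<in> Hp p \<and> (\<forall>t\<in>{u..v}. f t = s * t + c)"
proof -
  obtain S where S: "finite S" "a \<in> S" "b \<in> S" "S \<subseteq> {a..b}"
    "\<forall>u\<in>S. \<forall>v\<in>S. u < v \<longrightarrow> {u<..<v} \<inter> S = {} \<longrightarrow> (\<exists>s\<in>Hp p. \<exists>c. \<forall>t\<in>{u..v}. f t = s * t + c)"
    using K ab unfolding K_real_def by blast
  obtain u v where uv: "u \<in> S" "v \<in> S" "u \<le> x" "x < v" "{u<..<v} \<inter> S = {}"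
    using locate_right[OF S(1,2,3) x] by blast
  then obtain s c where "s \<in> Hp p" "\<forall>t\<in>{u..v}. f t = s * t + c" using S(5) by force
  then show ?thesis using uv S(4) by (intro exI[of _ u] exI[of _ v] exI[of _ s] exI[of _ c]) auto
qed

lemma K_piece_left:
  assumes K: "K_real p f" and ab: "0 < a" "a < b" and x: "a < x" "x \<le> b"
  shows "\<exists>u v s c. u < x \<and> x \<le> v \<and> a \<le> u \<and> v \<le> b \<and> s \<in> Hp p \<and> (\<forall>t\<in>{u..v}. f t = s * t + c)"
proof -
  obtain S where S: "finite S" "a \<in> S" "b \<in> S" "S \<subseteq> {a..b}"
    "\<forall>u\<in>S. \<forall>v\<in>S. u < v \<longrightarrow> {u<..<v} \<inter> S = {} \<longrightarrow> (\<exists>s\<in>Hp p. \<exists>c. \<forall>t\<in>{u..v}. f t = s * t + c)"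
    using K ab unfolding K_real_def by blast
  obtain u v where uv: "u \<in> S" "v \<in> S" "u < x" "x \<le> v" "{u<..<v} \<inter> S = {}"
    using locate_left[OF S(1,2,3) x] by blast
  then obtain s c where "s \<in> Hp p" "\<forall>t\<in>{u..v}. f t = s * t + c" using S(5) by force
  then show ?thesis using uv S(4) by (intro exI[of _ u] exI[of _ v] exI[of _ s] exI[of _ c]) auto
qed

lemma piece_Rg:
  assumes "u \<le> x" "x < v" "\<forall>t\<in>{u..v}. f t = s * t + c"
  shows "Rg f x s"
  unfolding Rg_def
proof (intro exI[of _ "v - x"] conjI ballI)
  fix t assume t: "t \<in> {x..x + (v - x)}"
  have "f t = s * t + c" "f x = s * x + c" using assms t by auto
  then show "f t = f x + s * (t - x)" by (simp add: algebra_simps)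
qed (use assms in auto)

lemma piece_Lf:
  assumes "u < x" "x \<le> v" "\<forall>t\<in>{u..v}. f t = s * t + c"
  shows "Lf f x s"
  unfolding Lf_def
proof (intro exI[of _ "x - u"] conjI ballI)
  fix t assume t: "t \<in> {x - (x - u)..x}"
  have "f t = s * t + c" "f x = s * x + c" using assms t by auto
  then show "f t = f x + s * (t - x)" by (simp add: algebra_simps)
qed (use assms in auto)

lemma K_Rg:
  assumes K: "K_real p f" and x: "0 < x"
  shows "\<exists>s\<in>Hp p. Rg f x s"
proof -
  obtain u v s c where "u \<le> x" "x < v" "s \<in> Hp p" "\<forall>t\<in>{u..v}. f t = s * t + c"
    using K_piece_right[OF K, of "x/2" "2*x" x] x by auto
  then show ?thesis using piece_Rg by blast
qed

lemma K_Lf: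
  assumes K: "K_real p f" and x: "0 < x"
  shows "\<exists>s\<in>Hp p. Lf f x s"
proof -
  obtain u v s c where "u < x" "x \<le> v" "s \<in> Hp p" "\<forall>t\<in>{u..v}. f t = s * t + c"
    using K_piece_left[OF K, of "x/2" "2*x" x] x by auto
  then show ?thesis using piece_Lf by blast
qed

lemma Rg_slopes:
  assumes "Rg f x s" shows "right_slopes f x = {s}"
proof -
  obtain d where d: "d > 0" "\<forall>t\<in>{x..x+d}. f t = f x + s * (t - x)" using assms unfolding Rg_def by blast
  have ev: "eventually (\<lambda>y. s = (f y - f x) / (y - x)) (at_right x)"
  proof -
    have ev0: "eventually (\<lambda>y. y \<in> {x<..<x + d}) (at_right x)"
      using d(1) by (intro eventually_at_right_real) simp
    show ?thesis using ev0
    proof (rule eventually_mono)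
      fix y assume y: "y \<in> {x<..<x + d}"
      then have "y \<in> {x..x+d}" by simp
      then have "f y = f x + s * (y - x)" using d(2) by blast
      then have "f y - f x = s * (y - x)" by simp
      moreover have "y - x \<noteq> 0" using y by simp
      ultimately show "s = (f y - f x) / (y - x)" by simp
    qed
  qed
  have lim: "((\<lambda>y. (f y - f x) / (y - x)) \<longlongrightarrow> s) (at_right x)"
    by (rule Lim_transform_eventually[OF tendsto_const ev])
  show ?thesis
  proof
    show "right_slopes f x \<subseteq> {s}"
    proof
      fix h assume "h \<in> right_slopes f x"
      then have "((\<lambda>y. (f y - f x) / (y - x)) \<longlongrightarrow> h) (at_right x)"
        unfolding right_slopes_def by (simp add: has_field_derivative_iff)
      then have "h = s" using tendsto_unique[OF trivial_limit_at_right_real _ lim] by blast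
      then show "h \<in> {s}" by simp
    qed
    show "{s} \<subseteq> right_slopes f x"
      using lim unfolding right_slopes_def by (simp add: has_field_derivative_iff)
  qed
qed

lemma Lf_slopes:
  assumes "Lf f x s" shows "left_slopes f x = {s}"
proof -
  obtain d where d: "d > 0" "\<forall>t\<in>{x-d..x}. f t = f x + s * (t - x)" using assms unfolding Lf_def by blast
  have ev: "eventually (\<lambda>y. s = (f y - f x) / (y - x)) (at_left x)"
  proof -
    have ev0: "eventually (\<lambda>y. y \<in> {x - d<..<x}) (at_left x)"
      using d(1) by (intro eventually_at_left_real) simp
    show ?thesis using ev0
    proof (rule eventually_mono)
      fix y assume y: "y \<in> {x - d<..<x}"
      then have "y \<in> {x-d..x}" by simp
      then have "f y = f x + s * (y - x)" using d(2) by blast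
      then have "f y - f x = s * (y - x)" by simp
      moreover have "y - x \<noteq> 0" using y by simp
      ultimately show "s = (f y - f x) / (y - x)" by simp
    qed
  qed
  have lim: "((\<lambda>y. (f y - f x) / (y - x)) \<longlongrightarrow> s) (at_left x)"
    by (rule Lim_transform_eventually[OF tendsto_const ev])
  show ?thesis
  proof
    show "left_slopes f x \<subseteq> {s}"
    proof
      fix h assume "h \<in> left_slopes f x"
      then have "((\<lambda>y. (f y - f x) / (y - x)) \<longlongrightarrow> h) (at_left x)"
        unfolding left_slopes_def by (simp add: has_field_derivative_iff)
      then have "h = s" using tendsto_unique[OF trivial_limit_at_left_real _ lim] by blast
      then show "h \<in> {s}" by simp
    qed
    show "{s} \<subseteq> left_slopes f x"
      using lim unfolding left_slopes_def by (simp add: has_field_derivative_iff)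
  qed
qed

lemma slopes_un: "slopes f x = left_slopes f x \<union> right_slopes f x"
  unfolding slopes_def left_slopes_def right_slopes_def by auto

lemma Rg_unique: "Rg f x a \<Longrightarrow> Rg f x b \<Longrightarrow> a = b"
  using Rg_slopes by blast

lemma Lf_unique: "Lf f x a \<Longrightarrow> Lf f x b \<Longrightarrow> a = b"
  using Lf_slopes by blast

lemma per_pow:
  assumes per: "\<forall>x>0. f (real p * x) = f x" and t: "t > 0" and p0: "p > 0"
  shows "f (real p ^ n * t) = f t"
proof (induction n)
  case (Suc n)
  have "f (real p ^ Suc n * t) = f (real p * (real p ^ n * t))" by (simp add: algebra_simps)
  also have "\<dots> = f (real p ^ n * t)"
    using per t p0 by simp
  finally show ?case using Suc by simp
qed simp

lemma per_powi:
  assumes pp: "prime p" and per: "\<forall>x>0. f (real p * x) = f x" and t: "t > 0"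
  shows "f (real p powi k * t) = f t"
proof (cases "k \<ge> 0")
  case True
  define n where "n = nat k"
  have "k = int n" using True by (simp add: n_def)
  then show ?thesis using per_pow[OF per t] prime_gt_0_nat[OF pp] by simp
next
  case False
  define n where "n = nat (- k)"
  have n: "k = - int n" using False by (simp add: n_def)
  have p0: "real p > 0" using p_gt1[OF pp] by auto
  have e0: "real p powi k = inverse (real p ^ n)" using n by (simp add: power_int_minus)
  have e: "real p powi k * t = t / real p ^ n" unfolding e0 by (simp add: field_simps)
  have tt: "t / real p ^ n > 0" using t p0 by simp
  have "f (real p ^ n * (t / real p ^ n)) = f (t / real p ^ n)"
    by (rule per_pow[OF per tt prime_gt_0_nat[OF pp]])
  moreover have "real p ^ n * (t / real p ^ n) = t" using p0 by simp
  ultimately show ?thesis using e by simp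
qed

lemma Rg_scale:
  assumes q: "q > 0" and per: "\<forall>t>0. f (q * t) = f t" and x: "x > 0" and R: "Rg f x s"
  shows "Rg f (q * x) (s / q)"
proof -
  obtain d where d: "d > 0" "\<forall>t\<in>{x..x+d}. f t = f x + s * (t - x)" using R unfolding Rg_def by blast
  show ?thesis unfolding Rg_def
  proof (intro exI[of _ "q * d"] conjI ballI)
    show "q * d > 0" using q d by simp
    fix t assume t: "t \<in> {q * x..q * x + q * d}"
    then have t': "t / q \<in> {x..x+d}" using q by (auto simp: field_simps)
    have tp: "t / q > 0" using t' x by auto
    have "f t = f (q * (t / q))" using q by simp
    also have "\<dots> = f (t / q)" using per tp by blast
    also have "\<dots> = f x + s * (t / q - x)" using d(2) t' by blast
    also have "\<dots> = f (q * x) + s / q * (t - q * x)"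
    proof -
      have fq: "f (q * x) = f x" using per x by blast
      have "s * (t / q - x) = s / q * (t - q * x)" using q by (simp add: field_simps)
      then show ?thesis using fq by simp
    qed
    finally show "f t = f (q * x) + s / q * (t - q * x)" .
  qed
qed

lemma Lf_scale:
  assumes q: "q > 0" and per: "\<forall>t>0. f (q * t) = f t" and x: "x > 0" and R: "Lf f x s"
  shows "Lf f (q * x) (s / q)"
proof -
  obtain d where d: "d > 0" "\<forall>t\<in>{x-d..x}. f t = f x + s * (t - x)" using R unfolding Lf_def by blast
  define e where "e = min d (x / 2)"
  have e: "e > 0" "e \<le> d" "e < x" using d x by (auto simp: e_def)
  show ?thesis unfolding Lf_def
  proof (intro exI[of _ "q * e"] conjI ballI)
    show "q * e > 0" using q e by simp
    fix t assume t: "t \<in> {q * x - q * e..q * x}"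
    then have t': "t / q \<in> {x-e..x}" using q by (auto simp: field_simps)
    have tp: "t / q > 0" using t' e by auto
    have "f t = f (q * (t / q))" using q by simp
    also have "\<dots> = f (t / q)" using per tp by blast
    also have "\<dots> = f x + s * (t / q - x)"
    proof -
      have "t / q \<in> {x-d..x}" using t' e(2) by simp
      then show ?thesis using d(2) by blast
    qed
    also have "\<dots> = f (q * x) + s / q * (t - q * x)"
    proof -
      have fq: "f (q * x) = f x" using per x by blast
      have "s * (t / q - x) = s / q * (t - q * x)" using q by (simp add: field_simps)
      then show ?thesis using fq by simp
    qed
    finally show "f t = f (q * x) + s / q * (t - q * x)" .
  qed
qed

lemma exist_k:
  assumes pp: "prime p" and x: "x > 0"
  shows "\<exists>k::int. 1 \<le> real p powi k * x \<and> real p powi k * x < real p"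
proof -
  have p1: "real p > 1" using p_gt1[OF pp] .
  define n where "n = \<lfloor>log (real p) x\<rfloor>"
  have h: "real p powr real_of_int n \<le> x \<and> x < real p powr (real_of_int n + 1)"
    using floor_log_eq_powr_iff[OF x p1, of n] n_def by simp
  have e1: "real p powr real_of_int n = real p powi n"
    using p1 by (intro powr_real_of_int') auto
  have e2: "real p powr (real_of_int n + 1) = real p powi (n + 1)"
    using p1 powr_real_of_int'[of "real p" "n+1"] by simp
  have pn: "real p powi (- n) > 0" using p1 by simp
  have a: "1 \<le> real p powi (- n) * x"
  proof -
    have "real p powi (- n) * real p powi n \<le> real p powi (- n) * x"
      using h e1 pn by (intro mult_left_mono) auto
    moreover have "real p powi (- n) * real p powi n = 1"
      using p1 by (simp add: power_int_minus)
    ultimately show ?thesis by simp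
  qed
  have b: "real p powi (- n) * x < real p"
  proof -
    have "real p powi (- n) * x < real p powi (- n) * real p powi (n + 1)"
      using h e2 pn by (intro mult_strict_left_mono) auto
    moreover have "real p powi (- n) * real p powi (n + 1) = real p"
      using p1 power_int_add[of "real p" "-n" "n+1"] by simp
    ultimately show ?thesis by simp
  qed
  show ?thesis using a b by blast
qed

lemma exist_k2:
  assumes pp: "prime p" and x: "x > 0"
  shows "\<exists>k::int. 1 < real p powi k * x \<and> real p powi k * x \<le> real p"
proof -
  obtain k where k: "1 \<le> real p powi k * x" "real p powi k * x < real p" using exist_k[OF pp x] by blast
  show ?thesis
  proof (cases "real p powi k * x = 1")
    case True
    have p0: "real p \<noteq> 0" using p_gt1[OF pp] by auto
    have "real p powi (k + 1) * x = real p * (real p powi k * x)"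
      using p0 by (simp add: power_int_add)
    then have "real p powi (k + 1) * x = real p" using True by simp
    then show ?thesis using p_gt1[OF pp] by (intro exI[of _ "k+1"]) simp
  next
    case False then show ?thesis using k by (intro exI[of _ k]) simp
  qed
qed



definition N :: "nat \<Rightarrow> (real \<Rightarrow> real) \<Rightarrow> real set" where
  "N p f = {padic_abs p h / x | x h. 0 < x \<and> h \<in> slopes f x}"

lemma pnorm_N: "pnorm p f = Sup (N p f)"
  by (simp add: pnorm_def N_def)

lemma K_per: "K_real p f \<Longrightarrow> \<forall>t>0. f (real p * t) = f t"
  unfolding K_real_def by blast

lemma scale_common:
  assumes pp: "prime p" and s: "s \<in> HP p" and x: "x > 0"
  shows "s / real p powi k \<in> HP p \<and> padic_abs p (s / real p powi k) / (real p powi k * x) = padic_abs p s / x"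
proof -
  have p0: "real p > 0" using p_gt1[OF pp] by simp
  have q0: "real p powi k > 0" using p0 by simp
  have e: "s / real p powi k = s * real p powi (- k)"
    by (simp add: power_int_minus divide_inverse)
  have h: "s * real p powi (- k) \<in> HP p \<and> padic_abs p (s * real p powi (- k)) = real p powi k * padic_abs p s"
    using HP_mult[OF pp s, of "-k"] by simp
  have "padic_abs p (s / real p powi k) / (real p powi k * x) = real p powi k * padic_abs p s / (real p powi k * x)"
    using e h by simp
  also have "\<dots> = padic_abs p s / x" using q0 p0 by (intro mult_divide_mult_cancel_left) simp
  finally show ?thesis using e h by simp
qed

lemma N_repr:
  assumes pp: "prime p" and K: "K_real p f" and x: "x > 0" and h: "h \<in> slopes f x"
  shows "\<exists>y s. s \<in> HP p \<and> padic_abs p h / x = padic_abs p s / y \<and>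
     ((1 \<le> y \<and> y < real p \<and> Rg f y s) \<or> (1 < y \<and> y \<le> real p \<and> Lf f y s))"
proof -
  have per: "\<forall>t>0. f (real p * t) = f t" using K_per[OF K] .
  have p0: "real p > 0" using p_gt1[OF pp] by simp
  have perq: "\<forall>t>0. f (real p powi k * t) = f t" for k using per_powi[OF pp per] by blast
  have "h \<in> right_slopes f x \<or> h \<in> left_slopes f x" using h slopes_un by blast
  then show ?thesis
  proof
    assume hr: "h \<in> right_slopes f x"
    obtain s where s: "s \<in> Hp p" "Rg f x s" using K_Rg[OF K x] by blast
    have hs: "h = s" using hr Rg_slopes[OF s(2)] by simp
    obtain k where k: "1 \<le> real p powi k * x" "real p powi k * x < real p" using exist_k[OF pp x] by blast
    have R: "Rg f (real p powi k * x) (s / real p powi k)"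
      using Rg_scale[OF _ perq x s(2)] p0 by simp
    have sc: "s / real p powi k \<in> HP p \<and> padic_abs p (s / real p powi k) / (real p powi k * x) = padic_abs p s / x"
      using scale_common[OF pp Hp_HP[OF pp s(1)] x] by blast
    show ?thesis
      by (rule exI[of _ "real p powi k * x"], rule exI[of _ "s / real p powi k"]) (use sc hs k R in simp)
  next
    assume hl: "h \<in> left_slopes f x"
    obtain s where s: "s \<in> Hp p" "Lf f x s" using K_Lf[OF K x] by blast
    have hs: "h = s" using hl Lf_slopes[OF s(2)] by simp
    obtain k where k: "1 < real p powi k * x" "real p powi k * x \<le> real p" using exist_k2[OF pp x] by blast
    have R: "Lf f (real p powi k * x) (s / real p powi k)"
      using Lf_scale[OF _ perq x s(2)] p0 by simp
    have sc: "s / real p powi k \<in> HP p \<and> padic_abs p (s / real p powi k) / (real p powi k * x) = padic_abs p s / x"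
      using scale_common[OF pp Hp_HP[OF pp s(1)] x] by blast
    show ?thesis
      by (rule exI[of _ "real p powi k * x"], rule exI[of _ "s / real p powi k"]) (use sc hs k R in simp)
  qed
qed

lemma N_bdd:
  assumes pp: "prime p" and K: "K_real p f"
  shows "bdd_above (N p f)"
proof -
  have p1: "real p > 1" using p_gt1[OF pp] .
  obtain S where S: "finite S" "1 \<in> S" "real p \<in> S" "S \<subseteq> {1..real p}"
    "\<forall>u\<in>S. \<forall>v\<in>S. u < v \<longrightarrow> {u<..<v} \<inter> S = {} \<longrightarrow> (\<exists>s\<in>Hp p. \<exists>c. \<forall>t\<in>{u..v}. f t = s * t + c)"
    using K p1 unfolding K_real_def by (metis zero_less_one)
  define A where "A = (\<lambda>(u, v). (f v - f u) / (v - u)) ` (S \<times> S)"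
  define B where "B = Max (padic_abs p ` A)"
  have finA: "finite (padic_abs p ` A)" using S(1) by (simp add: A_def)
  have slope_eq: "s' = (f v - f u) / (v - u)" if "u < v" "\<forall>t\<in>{u..v}. f t = s' * t + c" for u v s' c
  proof -
    have "f v - f u = s' * (v - u)" using that by (simp add: algebra_simps)
    then show ?thesis using that(1) by simp
  qed
  have inA: "s \<in> A" if "(1 \<le> y \<and> y < real p \<and> Rg f y s) \<or> (1 < y \<and> y \<le> real p \<and> Lf f y s)" for y s
    using that
  proof
    assume a: "1 \<le> y \<and> y < real p \<and> Rg f y s"
    obtain u v where uv: "u \<in> S" "v \<in> S" "u \<le> y" "y < v" "{u<..<v} \<inter> S = {}"
      using locate_right[OF S(1,2,3), of y] a by blast
    then obtain s' c where sc: "\<forall>t\<in>{u..v}. f t = s' * t + c" using S(5) by force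
    have "Rg f y s'" using piece_Rg[OF uv(3,4) sc] .
    then have "s = s'" using Rg_unique a by blast
    then have "s = (f v - f u) / (v - u)" using slope_eq[OF _ sc] uv by simp
    then show "s \<in> A" using uv unfolding A_def by force
  next
    assume a: "1 < y \<and> y \<le> real p \<and> Lf f y s"
    obtain u v where uv: "u \<in> S" "v \<in> S" "u < y" "y \<le> v" "{u<..<v} \<inter> S = {}"
      using locate_left[OF S(1,2,3), of y] a by blast
    then obtain s' c where sc: "\<forall>t\<in>{u..v}. f t = s' * t + c" using S(5) by force
    have "Lf f y s'" using piece_Lf[OF uv(3,4) sc] .
    then have "s = s'" using Lf_unique a by blast
    then have "s = (f v - f u) / (v - u)" using slope_eq[OF _ sc] uv by simp
    then show "s \<in> A" using uv unfolding A_def by force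
  qed
  show ?thesis unfolding bdd_above_def
  proof (intro exI[of _ B] ballI)
    fix z assume "z \<in> N p f"
    then obtain x h where xh: "z = padic_abs p h / x" "0 < x" "h \<in> slopes f x" unfolding N_def by blast
    obtain y s where ys: "s \<in> HP p" "padic_abs p h / x = padic_abs p s / y"
      "(1 \<le> y \<and> y < real p \<and> Rg f y s) \<or> (1 < y \<and> y \<le> real p \<and> Lf f y s)"
      using N_repr[OF pp K xh(2,3)] by blast
    have y1: "1 \<le> y" using ys(3) by auto
    have sA: "s \<in> A" using inA[OF ys(3)] .
    have "padic_abs p s / y \<le> padic_abs p s / 1"
      using y1 pa_nonneg[OF pp] by (intro divide_left_mono) auto
    also have "\<dots> \<le> B" unfolding B_def using finA sA by simp
    finally show "z \<le> B" using xh ys by simp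
  qed
qed

lemma N_upper:
  assumes pp: "prime p" and K: "K_real p f" and x: "x > 0" and h: "h \<in> slopes f x"
  shows "padic_abs p h / x \<le> pnorm p f"
  unfolding pnorm_N by (rule cSup_upper[OF _ N_bdd[OF pp K]]) (use x h in \<open>auto simp: N_def\<close>)

lemma Rg_ex_slopes: "Rg f x s \<Longrightarrow> s \<in> slopes f x"
  using Rg_slopes slopes_un by blast

lemma Lf_ex_slopes: "Lf f x s \<Longrightarrow> s \<in> slopes f x"
  using Lf_slopes slopes_un by blast

lemma N_ne:
  assumes "K_real p f" shows "N p f \<noteq> {}"
proof -
  obtain s where "Rg f 1 s" using K_Rg[OF assms, of 1] by auto
  then have "s \<in> slopes f 1" by (rule Rg_ex_slopes)
  then show ?thesis unfolding N_def by fastforce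
qed



lemma small_aff:
  fixes e c w :: real
  assumes e: "e > 0" and w: "0 \<le> w" "w \<le> e / (\<bar>c\<bar> + 1)"
  shows "0 \<le> e + c * w"
proof -
  have c1: "\<bar>c\<bar> + 1 > 0" by simp
  have "(\<bar>c\<bar> + 1) * w \<le> (\<bar>c\<bar> + 1) * (e / (\<bar>c\<bar> + 1))"
    using w c1 by (intro mult_left_mono) auto
  also have "\<dots> = e" using c1 by simp
  finally have a: "\<bar>c\<bar> * w + w \<le> e" by (simp add: algebra_simps)
  have b: "\<bar>c * w\<bar> = \<bar>c\<bar> * w" using w by (simp add: abs_mult)
  have "- (c * w) \<le> \<bar>c * w\<bar>" by (rule abs_ge_minus_self)
  then show ?thesis using a b w by linarith
qed

lemma max_aff: "0 \<le> (w::real) \<Longrightarrow> max (y + a * w) (y + b * w) = y + max a b * w"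
proof (cases "a \<le> b")
  case True
  assume w: "0 \<le> w"
  have "a * w \<le> b * w" using True w by (rule mult_right_mono)
  then show ?thesis using True by (simp add: max_def)
next
  case False
  assume w: "0 \<le> w"
  have "b * w \<le> a * w" using False w by (intro mult_right_mono) auto
  then show ?thesis using False by (simp add: max_def)
qed

lemma Rg_max:
  assumes Rf: "Rg f x a" and Rgg: "Rg g x b"
  shows "\<exists>s. Rg (\<lambda>t. max (f t) (g t)) x s \<and> (g x < f x \<longrightarrow> s = a) \<and> (f x < g x \<longrightarrow> s = b)
     \<and> (f x = g x \<longrightarrow> s = max a b)"
proof -
  obtain d1 where d1: "d1 > 0" "\<forall>t\<in>{x..x+d1}. f t = f x + a * (t - x)" using Rf unfolding Rg_def by blast
  obtain d2 where d2: "d2 > 0" "\<forall>t\<in>{x..x+d2}. g t = g x + b * (t - x)" using Rgg unfolding Rg_def by blast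
  consider (gt) "g x < f x" | (lt) "f x < g x" | (eq) "f x = g x" by linarith
  then show ?thesis
  proof cases
    case gt
    define e where "e = f x - g x"
    define d where "d = min (min d1 d2) (e / (\<bar>a - b\<bar> + 1))"
    have e0: "e > 0" using gt by (simp add: e_def)
    have d0: "d > 0" using d1 d2 e0 by (simp add: d_def)
    have "Rg (\<lambda>t. max (f t) (g t)) x a"
      unfolding Rg_def
    proof (intro exI[of _ d] conjI ballI)
      fix t assume t: "t \<in> {x..x+d}"
      have t1: "t \<in> {x..x+d1}" and t2: "t \<in> {x..x+d2}" using t by (auto simp: d_def)
      have tf: "f t = f x + a * (t - x)" using d1(2) t1 by blast
      have tg: "g t = g x + b * (t - x)" using d2(2) t2 by blast
      have w: "0 \<le> t - x" "t - x \<le> e / (\<bar>a - b\<bar> + 1)" using t by (auto simp: d_def)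
      have "0 \<le> e + (a - b) * (t - x)" by (rule small_aff[OF e0 w])
      then have "g t \<le> f t" using tf tg by (simp add: e_def algebra_simps)
      then show "max (f t) (g t) = max (f x) (g x) + a * (t - x)" using gt tf by simp
    qed (use d0 in simp)
    then show ?thesis using gt by auto
  next
    case lt
    define e where "e = g x - f x"
    define d where "d = min (min d1 d2) (e / (\<bar>b - a\<bar> + 1))"
    have e0: "e > 0" using lt by (simp add: e_def)
    have d0: "d > 0" using d1 d2 e0 by (simp add: d_def)
    have "Rg (\<lambda>t. max (f t) (g t)) x b"
      unfolding Rg_def
    proof (intro exI[of _ d] conjI ballI)
      fix t assume t: "t \<in> {x..x+d}"
      have t1: "t \<in> {x..x+d1}" and t2: "t \<in> {x..x+d2}" using t by (auto simp: d_def)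
      have tf: "f t = f x + a * (t - x)" using d1(2) t1 by blast
      have tg: "g t = g x + b * (t - x)" using d2(2) t2 by blast
      have w: "0 \<le> t - x" "t - x \<le> e / (\<bar>b - a\<bar> + 1)" using t by (auto simp: d_def)
      have "0 \<le> e + (b - a) * (t - x)" by (rule small_aff[OF e0 w])
      then have "f t \<le> g t" using tf tg by (simp add: e_def algebra_simps)
      then show "max (f t) (g t) = max (f x) (g x) + b * (t - x)" using lt tg by simp
    qed (use d0 in simp)
    then show ?thesis using lt by auto
  next
    case eq
    define d where "d = min d1 d2"
    have d0: "d > 0" using d1 d2 by (simp add: d_def)
    have "Rg (\<lambda>t. max (f t) (g t)) x (max a b)"
      unfolding Rg_def
    proof (intro exI[of _ d] conjI ballI)
      fix t assume t: "t \<in> {x..x+d}"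
      have t1: "t \<in> {x..x+d1}" and t2: "t \<in> {x..x+d2}" using t by (auto simp: d_def)
      have tf: "f t = f x + a * (t - x)" using d1(2) t1 by blast
      have "g t = g x + b * (t - x)" using d2(2) t2 by blast
      then have tg: "g t = f x + b * (t - x)" using eq by simp
      have w: "0 \<le> t - x" using t by auto
      show "max (f t) (g t) = max (f x) (g x) + max a b * (t - x)"
        using max_aff[OF w, of "f x" a b] tf tg eq by simp
    qed (use d0 in simp)
    then show ?thesis using eq by auto
  qed
qed

lemma Lf_refl: "Lf f x s \<longleftrightarrow> Rg (\<lambda>t. f (2 * x - t)) x (- s)"
proof
  assume "Lf f x s"
  then obtain d where d: "d > 0" "\<forall>t\<in>{x-d..x}. f t = f x + s * (t - x)" unfolding Lf_def by blast
  show "Rg (\<lambda>t. f (2 * x - t)) x (- s)" unfolding Rg_def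
  proof (intro exI[of _ d] conjI ballI)
    fix t assume t: "t \<in> {x..x+d}"
    then have "2 * x - t \<in> {x-d..x}" by auto
    then have "f (2 * x - t) = f x + s * (2 * x - t - x)" using d(2) by blast
    then show "f (2 * x - t) = f (2 * x - x) + - s * (t - x)" by (simp add: algebra_simps)
  qed (use d in simp)
next
  assume "Rg (\<lambda>t. f (2 * x - t)) x (- s)"
  then obtain d where d: "d > 0" "\<forall>t\<in>{x..x+d}. f (2 * x - t) = f (2 * x - x) + - s * (t - x)"
    unfolding Rg_def by blast
  show "Lf f x s" unfolding Lf_def
  proof (intro exI[of _ d] conjI ballI)
    fix t assume t: "t \<in> {x-d..x}"
    then have "2 * x - t \<in> {x..x+d}" by auto
    then have "f (2 * x - (2 * x - t)) = f (2 * x - x) + - s * (2 * x - t - x)" using d(2) by blast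
    then show "f t = f x + s * (t - x)" by (simp add: algebra_simps)
  qed (use d in simp)
qed

lemma Lf_max:
  assumes Lff: "Lf f x a" and Lfg: "Lf g x b"
  shows "\<exists>s. Lf (\<lambda>t. max (f t) (g t)) x s \<and> (g x < f x \<longrightarrow> s = a) \<and> (f x < g x \<longrightarrow> s = b)
     \<and> (f x = g x \<longrightarrow> s = min a b)"
proof -
  have "Rg (\<lambda>t. f (2 * x - t)) x (- a)" "Rg (\<lambda>t. g (2 * x - t)) x (- b)"
    using Lff Lfg Lf_refl by blast+
  from Rg_max[OF this] obtain s where s: "Rg (\<lambda>t. max (f (2 * x - t)) (g (2 * x - t))) x s"
    "g x < f x \<longrightarrow> s = - a" "f x < g x \<longrightarrow> s = - b" "f x = g x \<longrightarrow> s = max (- a) (- b)"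
    by auto
  have "Lf (\<lambda>t. max (f t) (g t)) x (- s)"
    unfolding Lf_refl using s(1) by simp
  moreover have "- max (- a) (- b) = min a b" by (simp add: max_def min_def)
  ultimately show ?thesis using s by (intro exI[of _ "- s"]) auto
qed

lemma Rg_add:
  assumes "Rg f x a" "Rg g x b" shows "Rg (\<lambda>t. f t + g t) x (a + b)"
proof -
  obtain d1 where d1: "d1 > 0" "\<forall>t\<in>{x..x+d1}. f t = f x + a * (t - x)" using assms(1) unfolding Rg_def by blast
  obtain d2 where d2: "d2 > 0" "\<forall>t\<in>{x..x+d2}. g t = g x + b * (t - x)" using assms(2) unfolding Rg_def by blast
  show ?thesis unfolding Rg_def
  proof (intro exI[of _ "min d1 d2"] conjI ballI)
    fix t assume t: "t \<in> {x..x + min d1 d2}"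
    have t1: "t \<in> {x..x+d1}" and t2: "t \<in> {x..x+d2}" using t by auto
    have "f t = f x + a * (t - x)" "g t = g x + b * (t - x)" using d1(2) d2(2) t1 t2 by blast+
    then show "f t + g t = f x + g x + (a + b) * (t - x)" by (simp add: algebra_simps)
  qed (use d1 d2 in simp)
qed

lemma Lf_add:
  assumes "Lf f x a" "Lf g x b" shows "Lf (\<lambda>t. f t + g t) x (a + b)"
proof -
  obtain d1 where d1: "d1 > 0" "\<forall>t\<in>{x-d1..x}. f t = f x + a * (t - x)" using assms(1) unfolding Lf_def by blast
  obtain d2 where d2: "d2 > 0" "\<forall>t\<in>{x-d2..x}. g t = g x + b * (t - x)" using assms(2) unfolding Lf_def by blast
  show ?thesis unfolding Lf_def
  proof (intro exI[of _ "min d1 d2"] conjI ballI)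
    fix t assume t: "t \<in> {x - min d1 d2..x}"
    have t1: "t \<in> {x-d1..x}" and t2: "t \<in> {x-d2..x}" using t by auto
    have "f t = f x + a * (t - x)" "g t = g x + b * (t - x)" using d1(2) d2(2) t1 t2 by blast+
    then show "f t + g t = f x + g x + (a + b) * (t - x)" by (simp add: algebra_simps)
  qed (use d1 d2 in simp)
qed

lemma Rg_cmult:
  assumes "Rg f x a" shows "Rg (\<lambda>t. c * f t) x (c * a)"
proof -
  obtain d1 where d1: "d1 > 0" "\<forall>t\<in>{x..x+d1}. f t = f x + a * (t - x)" using assms(1) unfolding Rg_def by blast
  show ?thesis unfolding Rg_def
  proof (intro exI[of _ d1] conjI ballI)
    fix t assume t: "t \<in> {x..x + d1}"
    have "f t = f x + a * (t - x)" using d1(2) t by blast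
    then have "c * f t = c * (f x + a * (t - x))" by simp
    also have "\<dots> = c * f x + c * a * (t - x)" by (simp add: algebra_simps)
    finally show "c * f t = c * f x + c * a * (t - x)" .
  qed (use d1 in simp)
qed

lemma Lf_cmult:
  assumes "Lf f x a" shows "Lf (\<lambda>t. c * f t) x (c * a)"
proof -
  obtain d1 where d1: "d1 > 0" "\<forall>t\<in>{x-d1..x}. f t = f x + a * (t - x)" using assms(1) unfolding Lf_def by blast
  show ?thesis unfolding Lf_def
  proof (intro exI[of _ d1] conjI ballI)
    fix t assume t: "t \<in> {x-d1..x}"
    have "f t = f x + a * (t - x)" using d1(2) t by blast
    then have "c * f t = c * (f x + a * (t - x))" by simp
    also have "\<dots> = c * f x + c * a * (t - x)" by (simp add: algebra_simps)
    finally show "c * f t = c * f x + c * a * (t - x)" .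
  qed (use d1 in simp)
qed

lemma hplus_Rg:
  assumes l: "l > 0" and R: "Rg f l s" shows "hplus f l = l * s"
proof -
  obtain d where d: "d > 0" "\<forall>t\<in>{l..l+d}. f t = f l + s * (t - l)" using R unfolding Rg_def by blast
  have ev0: "eventually (\<lambda>e. e \<in> {0<..<d / l}) (at_right 0)"
    using d l by (intro eventually_at_right_real) simp
  have ev: "eventually (\<lambda>e. l * s = (f ((1 + e) * l) - f l) / e) (at_right 0)"
    using ev0
  proof (rule eventually_mono)
    fix e :: real assume e: "e \<in> {0<..<d / l}"
    have el: "e * l < d" using e l by (simp add: less_divide_eq)
    have "(1 + e) * l \<in> {l..l+d}" using e el l by (simp add: algebra_simps)
    then have "f ((1 + e) * l) = f l + s * ((1 + e) * l - l)" using d(2) by blast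
    then have "f ((1 + e) * l) - f l = (l * s) * e" by (simp add: algebra_simps)
    then show "l * s = (f ((1 + e) * l) - f l) / e" using e by simp
  qed
  have "((\<lambda>e. (f ((1 + e) * l) - f l) / e) \<longlongrightarrow> l * s) (at_right 0)"
    by (rule Lim_transform_eventually[OF tendsto_const ev])
  then show ?thesis unfolding hplus_def by (intro tendsto_Lim) simp_all
qed

lemma hminus_Lf:
  assumes l: "l > 0" and R: "Lf f l s" shows "hminus f l = l * s"
proof -
  obtain d where d: "d > 0" "\<forall>t\<in>{l-d..l}. f t = f l + s * (t - l)" using R unfolding Lf_def by blast
  have ev0: "eventually (\<lambda>e. e \<in> {- (d / l)<..<0}) (at_left 0)"
    using d l by (intro eventually_at_left_real) simp
  have ev: "eventually (\<lambda>e. l * s = (f ((1 + e) * l) - f l) / e) (at_left 0)"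
    using ev0
  proof (rule eventually_mono)
    fix e :: real assume e: "e \<in> {- (d / l)<..<0}"
    have "- e < d / l" using e by simp
    then have el: "- e * l < d" using l by (simp add: less_divide_eq)
    have "(1 + e) * l \<in> {l-d..l}" using e el l by (simp add: algebra_simps mult_nonpos_nonneg)
    then have "f ((1 + e) * l) = f l + s * ((1 + e) * l - l)" using d(2) by blast
    then have "f ((1 + e) * l) - f l = (l * s) * e" by (simp add: algebra_simps)
    then show "l * s = (f ((1 + e) * l) - f l) / e" using e by simp
  qed
  have "((\<lambda>e. (f ((1 + e) * l) - f l) / e) \<longlongrightarrow> l * s) (at_left 0)"
    by (rule Lim_transform_eventually[OF tendsto_const ev])
  then show ?thesis unfolding hminus_def by (intro tendsto_Lim) simp_all
qed

lemma pdiv_l: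
  assumes "H \<in> Cp p" shows "\<exists>l>0. \<forall>f. pdiv p f H = hplus f l - hminus f l"
proof -
  define l where "l = (SOME l. 0 < l \<and> H = (\<lambda>y. l * y) ` Hp p)"
  have "\<exists>l. 0 < l \<and> H = (\<lambda>y. l * y) ` Hp p" using assms unfolding Cp_def by blast
  then have "0 < l \<and> H = (\<lambda>y. l * y) ` Hp p" unfolding l_def by (rule someI_ex)
  then show ?thesis using assms unfolding pdiv_def l_def[symmetric] by (intro exI[of _ l]) auto
qed



definition consec :: "real set \<Rightarrow> real \<Rightarrow> real \<Rightarrow> bool" where
  "consec S u v \<longleftrightarrow> u \<in> S \<and> v \<in> S \<and> u < v \<and> {u<..<v} \<inter> S = {}"

lemma refine:
  assumes fin: "finite S1" and sub: "S1 \<subseteq> S" and Sab: "S \<subseteq> {a..b}" and a: "a \<in> S1" and b: "b \<in> S1"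
    and c: "consec S u v"
  shows "\<exists>u1 v1. consec S1 u1 v1 \<and> u1 \<le> u \<and> v \<le> v1"
proof -
  have uv: "u \<in> S" "v \<in> S" "u < v" "{u<..<v} \<inter> S = {}" using c unfolding consec_def by auto
  have ua: "a \<le> u" "v \<le> b" using uv Sab by auto
  define U where "U = {s\<in>S1. s \<le> u}"
  define V where "V = {s\<in>S1. v \<le> s}"
  have fU: "finite U" "U \<noteq> {}" using fin a ua by (auto simp: U_def)
  have fV: "finite V" "V \<noteq> {}" using fin b ua by (auto simp: V_def)
  define u1 where "u1 = Max U"
  define v1 where "v1 = Min V"
  have u1: "u1 \<in> S1" "u1 \<le> u" using Max_in[OF fU] by (auto simp: u1_def U_def)
  have v1: "v1 \<in> S1" "v \<le> v1" using Min_in[OF fV] by (auto simp: v1_def V_def)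
  have "{u1<..<v1} \<inter> S1 = {}"
  proof (rule ccontr)
    assume "{u1<..<v1} \<inter> S1 \<noteq> {}"
    then obtain w where w: "w \<in> S1" "u1 < w" "w < v1" by auto
    show False
    proof (cases "w \<le> u")
      case True
      then have "w \<in> U" using w by (auto simp: U_def)
      then have "w \<le> u1" using fU unfolding u1_def by simp
      with w show False by simp
    next
      case False
      show False
      proof (cases "v \<le> w")
        case True
        then have "w \<in> V" using w by (auto simp: V_def)
        then have "v1 \<le> w" using fV unfolding v1_def by simp
        with w show False by simp
      next
        case False2: False
        have "w \<in> {u<..<v} \<inter> S" using w sub False False2 by auto
        with uv show False by simp
      qed
    qed
  qed
  then show ?thesis using u1 v1 uv unfolding consec_def by (intro exI[of _ u1] exI[of _ v1]) auto
qed

lemma aff_zero: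
  fixes \<sigma> \<kappa> t m :: real
  assumes t: "\<sigma> * t + \<kappa> < 0" and m: "\<sigma> * m + \<kappa> > 0"
  shows "\<exists>z. min t m < z \<and> z < max t m \<and> \<sigma> * z + \<kappa> = 0"
proof -
  have s0: "\<sigma> \<noteq> 0" using t m by auto
  define z where "z = - \<kappa> / \<sigma>"
  have z: "\<sigma> * z + \<kappa> = 0" using s0 by (simp add: z_def)
  have a: "\<sigma> * t < \<sigma> * z" "\<sigma> * z < \<sigma> * m" using t m z by linarith+
  show ?thesis
  proof (cases "\<sigma> > 0")
    case True
    have "t < z" "z < m" using a True by (simp_all add: mult_less_cancel_left_pos)
    then show ?thesis using z by (intro exI[of _ z]) simp
  next
    case False
    then have sn: "\<sigma> < 0" using s0 by simp
    have "z < t" "m < z" using a sn by (simp_all add: mult_less_cancel_left_neg)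
    then show ?thesis using z by (intro exI[of _ z]) simp
  qed
qed

lemma finite_subsing: "\<forall>x\<in>A. \<forall>y\<in>A. x = y \<Longrightarrow> finite A"
proof (cases "A = {}")
  case False
  assume h: "\<forall>x\<in>A. \<forall>y\<in>A. x = y"
  then obtain x where "x \<in> A" using False by blast
  then have "A \<subseteq> {x}" using h by blast
  then show ?thesis using finite_subset by blast
qed simp

lemma K_max:
  assumes Kf: "K_real p f" and Kg: "K_real p g"
  shows "K_real p (\<lambda>x. max (f x) (g x))"
proof -
  have c1: "continuous_on {0<..} (\<lambda>x. max (f x) (g x))"
    using Kf Kg unfolding K_real_def by (intro continuous_on_max) auto
  have c2: "\<forall>x>0. max (f (real p * x)) (g (real p * x)) = max (f x) (g x)"
    using Kf Kg unfolding K_real_def by simp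
  have c3: "\<exists>S::real set. finite S \<and> a \<in> S \<and> b \<in> S \<and> S \<subseteq> {a..b} \<and>
           (\<forall>u\<in>S. \<forall>v\<in>S. u < v \<longrightarrow> {u<..<v} \<inter> S = {} \<longrightarrow>
              (\<exists>s\<in>Hp p. \<exists>c. \<forall>t\<in>{u..v}. max (f t) (g t) = s * t + c))"
    if ab: "0 < a" "a < b" for a b
  proof -
    obtain S1 where S1: "finite S1" "a \<in> S1" "b \<in> S1" "S1 \<subseteq> {a..b}"
      "\<forall>u\<in>S1. \<forall>v\<in>S1. u < v \<longrightarrow> {u<..<v} \<inter> S1 = {} \<longrightarrow> (\<exists>s\<in>Hp p. \<exists>c. \<forall>t\<in>{u..v}. f t = s * t + c)"
      using Kf ab unfolding K_real_def by blast
    obtain S2 where S2: "finite S2" "a \<in> S2" "b \<in> S2" "S2 \<subseteq> {a..b}"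
      "\<forall>u\<in>S2. \<forall>v\<in>S2. u < v \<longrightarrow> {u<..<v} \<inter> S2 = {} \<longrightarrow> (\<exists>s\<in>Hp p. \<exists>c. \<forall>t\<in>{u..v}. g t = s * t + c)"
      using Kg ab unfolding K_real_def by blast
    define S0 where "S0 = S1 \<union> S2"
    have S0: "finite S0" "a \<in> S0" "b \<in> S0" "S0 \<subseteq> {a..b}" using S1 S2 by (auto simp: S0_def)
    have affF: "\<exists>s\<in>Hp p. \<exists>c. \<forall>t\<in>{u..v}. f t = s * t + c"
      if A: "S1 \<subseteq> S" "S \<subseteq> {a..b}" "consec S u v" for S u v
    proof -
      obtain u1 v1 where uv1: "consec S1 u1 v1" "u1 \<le> u" "v \<le> v1"
        using refine[OF S1(1) A(1,2) S1(2,3) A(3)] by blast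
      then obtain s c where "s \<in> Hp p" "\<forall>t\<in>{u1..v1}. f t = s * t + c"
        using S1(5) unfolding consec_def by blast
      then show ?thesis using uv1 by force
    qed
    have affG: "\<exists>s\<in>Hp p. \<exists>c. \<forall>t\<in>{u..v}. g t = s * t + c"
      if A: "S2 \<subseteq> S" "S \<subseteq> {a..b}" "consec S u v" for S u v
    proof -
      obtain u1 v1 where uv1: "consec S2 u1 v1" "u1 \<le> u" "v \<le> v1"
        using refine[OF S2(1) A(1,2) S2(2,3) A(3)] by blast
      then obtain s c where "s \<in> Hp p" "\<forall>t\<in>{u1..v1}. g t = s * t + c"
        using S2(5) unfolding consec_def by blast
      then show ?thesis using uv1 by force
    qed
    define Zuv where "Zuv = (\<lambda>(u, v). {t\<in>{u..v}. f t = g t \<and> consec S0 u v \<and> (\<exists>t'\<in>{u..v}. f t' \<noteq> g t')})"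
    define Z where "Z = {t\<in>{a..b}. f t = g t \<and> (\<exists>u v. consec S0 u v \<and> t \<in> {u..v} \<and> (\<exists>t'\<in>{u..v}. f t' \<noteq> g t'))}"
    have Zsub: "Z \<subseteq> \<Union> (Zuv ` (S0 \<times> S0))"
    proof
      fix t assume "t \<in> Z"
      then obtain u v where uv: "f t = g t" "consec S0 u v" "t \<in> {u..v}" "\<exists>t'\<in>{u..v}. f t' \<noteq> g t'"
        unfolding Z_def by blast
      then have "(u, v) \<in> S0 \<times> S0" unfolding consec_def by auto
      moreover have "t \<in> Zuv (u, v)" using uv unfolding Zuv_def by auto
      ultimately show "t \<in> \<Union> (Zuv ` (S0 \<times> S0))" by blast
    qed
    have finZuv: "finite (Zuv uv)" for uv
    proof -
      obtain u v where uv: "uv = (u, v)" by (cases uv)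
      have "\<forall>t1\<in>Zuv (u, v). \<forall>t2\<in>Zuv (u, v). t1 = t2"
      proof (intro ballI)
        fix t1 t2 assume t1: "t1 \<in> Zuv (u, v)" and t2: "t2 \<in> Zuv (u, v)"
        have h1: "t1 \<in> {u..v}" "f t1 = g t1" "consec S0 u v" and t': "\<exists>t'\<in>{u..v}. f t' \<noteq> g t'"
          using t1 unfolding Zuv_def by auto
        have h2: "t2 \<in> {u..v}" "f t2 = g t2" using t2 unfolding Zuv_def by auto
        obtain s1 cc1 where f: "\<forall>t\<in>{u..v}. f t = s1 * t + cc1"
          using affF[of S0 u v] h1(3) S0(4) by (auto simp: S0_def)
        obtain s2 cc2 where g: "\<forall>t\<in>{u..v}. g t = s2 * t + cc2"
          using affG[of S0 u v] h1(3) S0(4) by (auto simp: S0_def)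
        have e1: "s1 * t1 + cc1 = s2 * t1 + cc2" using f g h1 by metis
        have e2: "s1 * t2 + cc1 = s2 * t2 + cc2" using f g h2 by metis
        show "t1 = t2"
        proof (rule ccontr)
          assume ne: "t1 \<noteq> t2"
          have "(s1 - s2) * (t1 - t2) = (s1 * t1 + cc1 - (s2 * t1 + cc2)) - (s1 * t2 + cc1 - (s2 * t2 + cc2))"
            by (simp add: algebra_simps)
          then have "(s1 - s2) * (t1 - t2) = 0" using e1 e2 by simp
          then have ss: "s1 = s2" using ne by simp
          then have cc: "cc1 = cc2" using e1 by simp
          obtain t' where "t' \<in> {u..v}" "f t' \<noteq> g t'" using t' by blast
          then show False using f g ss cc by metis
        qed
      qed
      then show ?thesis unfolding uv by (rule finite_subsing)
    qed
    have finZ: "finite Z"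
      by (rule finite_subset[OF Zsub]) (use S0(1) finZuv in simp)
    define S where "S = S0 \<union> Z"
    have S: "finite S" "a \<in> S" "b \<in> S" "S \<subseteq> {a..b}" "S0 \<subseteq> S"
      using S0 finZ by (auto simp: S_def Z_def)
    have pieces: "\<exists>s\<in>Hp p. \<exists>c. \<forall>t\<in>{u..v}. max (f t) (g t) = s * t + c"
      if uv: "u \<in> S" "v \<in> S" "u < v" "{u<..<v} \<inter> S = {}" for u v
    proof -
      have cuv: "consec S u v" using uv unfolding consec_def by blast
      obtain u0 v0 where uv0: "consec S0 u0 v0" "u0 \<le> u" "v \<le> v0"
        using refine[OF S0(1) S(5) S(4) S0(2,3) cuv] by blast
      obtain s1 cc1 where f: "s1 \<in> Hp p" "\<forall>t\<in>{u0..v0}. f t = s1 * t + cc1"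
        using affF[of S0 u0 v0] uv0(1) S0(4) by (auto simp: S0_def)
      obtain s2 cc2 where g: "s2 \<in> Hp p" "\<forall>t\<in>{u0..v0}. g t = s2 * t + cc2"
        using affG[of S0 u0 v0] uv0(1) S0(4) by (auto simp: S0_def)
      have sub: "{u..v} \<subseteq> {u0..v0}" using uv0 by auto
      have uvab: "a \<le> u" "v \<le> b" using uv S(4) by auto
      show ?thesis
      proof (cases "\<forall>t\<in>{u0..v0}. f t = g t")
        case True
        have "\<forall>t\<in>{u..v}. max (f t) (g t) = s1 * t + cc1"
        proof
          fix t assume "t \<in> {u..v}"
          then have "t \<in> {u0..v0}" using sub by blast
          then show "max (f t) (g t) = s1 * t + cc1" using True f(2) by simp
        qed
        then show ?thesis using f(1) by blast
      next
        case False
        then obtain t' where t': "t' \<in> {u0..v0}" "f t' \<noteq> g t'" by blast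
        have nozero: "f z \<noteq> g z" if z: "u < z" "z < v" for z
        proof
          assume fz: "f z = g z"
          have zab: "z \<in> {a..b}" using z uvab by auto
          have zuv0: "z \<in> {u0..v0}" using z uv0(2,3) by auto
          have "z \<in> Z" unfolding Z_def using zab fz uv0(1) zuv0 t' by blast
          then have "z \<in> {u<..<v} \<inter> S" using z by (auto simp: S_def)
          with uv(4) show False by simp
        qed
        have dd: "f t - g t = (s1 - s2) * t + (cc1 - cc2)" if tt: "t \<in> {u..v}" for t
        proof -
          have "t \<in> {u0..v0}" using sub tt by blast
          then have "f t = s1 * t + cc1" "g t = s2 * t + cc2" using f(2) g(2) by blast+
          then show ?thesis by (simp add: algebra_simps)
        qed
        define m where "m = (u + v) / 2"
        have m: "u < m" "m < v" using uv(3) by (auto simp: m_def)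
        have mne: "f m \<noteq> g m" using nozero[OF m] .
        have mI: "m \<in> {u..v}" using m by auto
        have between: False
          if tI: "t \<in> {u..v}" and sg: "(s1 - s2) * t + (cc1 - cc2) < 0" "(s1 - s2) * m + (cc1 - cc2) > 0" for t
        proof -
          obtain z where z: "min t m < z" "z < max t m" "(s1 - s2) * z + (cc1 - cc2) = 0"
            using aff_zero[OF sg] by blast
          have zuv: "u < z" "z < v" using z tI m by (auto simp: min_def max_def split: if_splits)
          then have "z \<in> {u..v}" by simp
          then have "f z - g z = 0" using dd[of z] z(3) by simp
          then have "f z = g z" by simp
          with nozero[OF zuv] show False by simp
        qed
        show ?thesis
        proof (cases "g m < f m")
          case True
          have "\<forall>t\<in>{u..v}. max (f t) (g t) = s1 * t + cc1"
          proof
            fix t assume tI: "t \<in> {u..v}"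
            have "\<not> f t < g t"
            proof
              assume "f t < g t"
              then have "(s1 - s2) * t + (cc1 - cc2) < 0" using dd[OF tI] by linarith
              moreover have "(s1 - s2) * m + (cc1 - cc2) > 0" using dd[OF mI] True by linarith
              ultimately show False by (rule between[OF tI])
            qed
            then have "max (f t) (g t) = f t" by simp
            moreover have "t \<in> {u0..v0}" using sub tI by blast
            ultimately show "max (f t) (g t) = s1 * t + cc1" using f(2) by simp
          qed
          then show ?thesis using f(1) by blast
        next
          case False
          then have lt: "f m < g m" using mne by simp
          have "\<forall>t\<in>{u..v}. max (f t) (g t) = s2 * t + cc2"
          proof
            fix t assume tI: "t \<in> {u..v}"
            have "\<not> g t < f t"
            proof
              assume "g t < f t"
              moreover have "(s2 - s1) * t + (cc2 - cc1) = - ((s1 - s2) * t + (cc1 - cc2))" by (simp add: algebra_simps)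
              moreover have "(s2 - s1) * m + (cc2 - cc1) = - ((s1 - s2) * m + (cc1 - cc2))" by (simp add: algebra_simps)
              ultimately have sg: "(s2 - s1) * t + (cc2 - cc1) < 0" "(s2 - s1) * m + (cc2 - cc1) > 0"
                using dd[OF tI] dd[OF mI] lt by linarith+
              obtain z where z: "min t m < z" "z < max t m" "(s2 - s1) * z + (cc2 - cc1) = 0"
                using aff_zero[OF sg] by blast
              have zuv: "u < z" "z < v" using z tI m by (auto simp: min_def max_def split: if_splits)
              then have zI: "z \<in> {u..v}" by simp
              have "f z - g z = (s1 - s2) * z + (cc1 - cc2)" using dd[OF zI] .
              moreover have "(s2 - s1) * z + (cc2 - cc1) = - ((s1 - s2) * z + (cc1 - cc2))" by (simp add: algebra_simps)
              ultimately have "f z - g z = 0" using z(3) by linarith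
              with nozero[OF zuv] show False by simp
            qed
            then have "max (f t) (g t) = g t" by simp
            moreover have "t \<in> {u0..v0}" using sub tI by blast
            ultimately show "max (f t) (g t) = s2 * t + cc2" using g(2) by simp
          qed
          then show ?thesis using g(1) by blast
        qed
      qed
    qed
    have "\<forall>u\<in>S. \<forall>v\<in>S. u < v \<longrightarrow> {u<..<v} \<inter> S = {} \<longrightarrow>
              (\<exists>s\<in>Hp p. \<exists>c. \<forall>t\<in>{u..v}. max (f t) (g t) = s * t + c)"
      using pieces by blast
    then show ?thesis using S(1-4) by (intro exI[of _ S]) blast
  qed
  show ?thesis unfolding K_real_def using c1 c2 c3 by blast
qed

lemma K_addc:
  assumes Kf: "K_real p f" shows "K_real p (\<lambda>x. f x + c)"
proof -
  have c1: "continuous_on {0<..} (\<lambda>x. f x + c)"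
    using Kf unfolding K_real_def by (intro continuous_on_add continuous_on_const) auto
  have c2: "\<forall>x>0. f (real p * x) + c = f x + c" using Kf unfolding K_real_def by simp
  have c3: "\<exists>S::real set. finite S \<and> a \<in> S \<and> b \<in> S \<and> S \<subseteq> {a..b} \<and>
           (\<forall>u\<in>S. \<forall>v\<in>S. u < v \<longrightarrow> {u<..<v} \<inter> S = {} \<longrightarrow>
              (\<exists>s\<in>Hp p. \<exists>c'. \<forall>t\<in>{u..v}. f t + c = s * t + c'))"
    if ab: "0 < a" "a < b" for a b
  proof -
    obtain S1 where S1: "finite S1" "a \<in> S1" "b \<in> S1" "S1 \<subseteq> {a..b}"
      "\<forall>u\<in>S1. \<forall>v\<in>S1. u < v \<longrightarrow> {u<..<v} \<inter> S1 = {} \<longrightarrow> (\<exists>s\<in>Hp p. \<exists>c. \<forall>t\<in>{u..v}. f t = s * t + c)"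
      using Kf ab unfolding K_real_def by blast
    have "\<forall>u\<in>S1. \<forall>v\<in>S1. u < v \<longrightarrow> {u<..<v} \<inter> S1 = {} \<longrightarrow>
              (\<exists>s\<in>Hp p. \<exists>c'. \<forall>t\<in>{u..v}. f t + c = s * t + c')"
    proof (intro ballI impI)
      fix u v assume "u \<in> S1" "v \<in> S1" "u < v" "{u<..<v} \<inter> S1 = {}"
      then obtain s c0 where "s \<in> Hp p" "\<forall>t\<in>{u..v}. f t = s * t + c0" using S1(5) by blast
      then show "\<exists>s\<in>Hp p. \<exists>c'. \<forall>t\<in>{u..v}. f t + c = s * t + c'"
        by (intro bexI[of _ s] exI[of _ "c0 + c"]) auto
    qed
    then show ?thesis using S1(1-4) by (intro exI[of _ S1]) blast
  qed
  show ?thesis unfolding K_real_def using c1 c2 c3 by blast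
qed



lemma slopes_max:
  assumes Kf: "K_real p f" and Kg: "K_real p g" and x: "x > 0"
    and h: "h \<in> slopes (\<lambda>t. max (f t) (g t)) x"
  shows "h \<in> slopes f x \<or> h \<in> slopes g x"
proof -
  have "h \<in> right_slopes (\<lambda>t. max (f t) (g t)) x \<or> h \<in> left_slopes (\<lambda>t. max (f t) (g t)) x"
    using h slopes_un by blast
  then show ?thesis
  proof
    assume hr: "h \<in> right_slopes (\<lambda>t. max (f t) (g t)) x"
    obtain a where a: "Rg f x a" using K_Rg[OF Kf x] by blast
    obtain b where b: "Rg g x b" using K_Rg[OF Kg x] by blast
    obtain s where s: "Rg (\<lambda>t. max (f t) (g t)) x s" "g x < f x \<longrightarrow> s = a" "f x < g x \<longrightarrow> s = b"
      "f x = g x \<longrightarrow> s = max a b" using Rg_max[OF a b] by blast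
    have hs: "h = s" using hr Rg_slopes[OF s(1)] by simp
    have "s = a \<or> s = b" using s(2,3,4) by (cases "g x < f x"; cases "f x < g x") (auto simp: max_def)
    then show ?thesis using hs Rg_ex_slopes[OF a] Rg_ex_slopes[OF b] by blast
  next
    assume hr: "h \<in> left_slopes (\<lambda>t. max (f t) (g t)) x"
    obtain a where a: "Lf f x a" using K_Lf[OF Kf x] by blast
    obtain b where b: "Lf g x b" using K_Lf[OF Kg x] by blast
    obtain s where s: "Lf (\<lambda>t. max (f t) (g t)) x s" "g x < f x \<longrightarrow> s = a" "f x < g x \<longrightarrow> s = b"
      "f x = g x \<longrightarrow> s = min a b" using Lf_max[OF a b] by blast
    have hs: "h = s" using hr Lf_slopes[OF s(1)] by simp
    have "s = a \<or> s = b" using s(2,3,4) by (cases "g x < f x"; cases "f x < g x") (auto simp: min_def)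
    then show ?thesis using hs Lf_ex_slopes[OF a] Lf_ex_slopes[OF b] by blast
  qed
qed

lemma part1:
  assumes pp: "prime p" and Kf: "K_real p f" and Kg: "K_real p g"
  shows "pnorm p (\<lambda>x. max (f x) (g x)) \<le> max (pnorm p f) (pnorm p g)"
  unfolding pnorm_N
proof (rule cSup_least)
  show "N p (\<lambda>x. max (f x) (g x)) \<noteq> {}" using N_ne[OF K_max[OF Kf Kg]] .
  fix z assume "z \<in> N p (\<lambda>x. max (f x) (g x))"
  then obtain x h where xh: "z = padic_abs p h / x" "0 < x" "h \<in> slopes (\<lambda>x. max (f x) (g x)) x"
    unfolding N_def by blast
  have "h \<in> slopes f x \<or> h \<in> slopes g x" using slopes_max[OF Kf Kg xh(2,3)] .
  then have "z \<le> pnorm p f \<or> z \<le> pnorm p g" using N_upper[OF pp Kf xh(2)] N_upper[OF pp Kg xh(2)] xh(1) by blast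
  then show "z \<le> max (Sup (N p f)) (Sup (N p g))" unfolding pnorm_N by linarith
qed

lemma slopes_Hp:
  assumes K: "K_real p f" and x: "x > 0" and h: "h \<in> slopes f x"
  shows "h \<in> Hp p"
proof -
  have "h \<in> right_slopes f x \<or> h \<in> left_slopes f x" using h slopes_un by blast
  then show ?thesis
  proof
    assume hr: "h \<in> right_slopes f x"
    obtain s where s: "s \<in> Hp p" "Rg f x s" using K_Rg[OF K x] by blast
    have "right_slopes f x = {s}" using s(2) by (rule Rg_slopes)
    then show ?thesis using hr s(1) by simp
  next
    assume hr: "h \<in> left_slopes f x"
    obtain s where s: "s \<in> Hp p" "Lf f x s" using K_Lf[OF K x] by blast
    have "left_slopes f x = {s}" using s(2) by (rule Lf_slopes)
    then show ?thesis using hr s(1) by simp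
  qed
qed

lemma part2:
  assumes pp: "prime p" and Kf: "K_real p f" and Kg: "K_real p g"
  shows "pnorm p (\<lambda>x. f x + g x) \<le> max (pnorm p f) (pnorm p g)"
  unfolding pnorm_N
proof (rule cSup_least)
  obtain a where a: "Rg f 1 a" using K_Rg[OF Kf, of 1] by auto
  obtain b where b: "Rg g 1 b" using K_Rg[OF Kg, of 1] by auto
  have "a + b \<in> slopes (\<lambda>x. f x + g x) 1" using Rg_ex_slopes[OF Rg_add[OF a b]] .
  then show "N p (\<lambda>x. f x + g x) \<noteq> {}" unfolding N_def by fastforce
  fix z assume "z \<in> N p (\<lambda>x. f x + g x)"
  then obtain x h where xh: "z = padic_abs p h / x" "0 < x" "h \<in> slopes (\<lambda>x. f x + g x) x"
    unfolding N_def by blast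
  have "\<exists>a b. a \<in> slopes f x \<and> b \<in> slopes g x \<and> h = a + b"
  proof -
    have "h \<in> right_slopes (\<lambda>x. f x + g x) x \<or> h \<in> left_slopes (\<lambda>x. f x + g x) x"
      using xh(3) slopes_un by blast
    then show ?thesis
    proof
      assume hr: "h \<in> right_slopes (\<lambda>x. f x + g x) x"
      obtain a where a: "Rg f x a" using K_Rg[OF Kf xh(2)] by blast
      obtain b where b: "Rg g x b" using K_Rg[OF Kg xh(2)] by blast
      have "h = a + b" using hr Rg_slopes[OF Rg_add[OF a b]] by simp
      then show ?thesis using Rg_ex_slopes[OF a] Rg_ex_slopes[OF b] by blast
    next
      assume hr: "h \<in> left_slopes (\<lambda>x. f x + g x) x"
      obtain a where a: "Lf f x a" using K_Lf[OF Kf xh(2)] by blast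
      obtain b where b: "Lf g x b" using K_Lf[OF Kg xh(2)] by blast
      have "h = a + b" using hr Lf_slopes[OF Lf_add[OF a b]] by simp
      then show ?thesis using Lf_ex_slopes[OF a] Lf_ex_slopes[OF b] by blast
    qed
  qed
  then obtain a b where ab: "a \<in> slopes f x" "b \<in> slopes g x" "h = a + b" by blast
  have aH: "a \<in> HP p" using Hp_HP[OF pp slopes_Hp[OF Kf xh(2) ab(1)]] .
  have bH: "b \<in> HP p" using Hp_HP[OF pp slopes_Hp[OF Kg xh(2) ab(2)]] .
  have ul: "padic_abs p h \<le> max (padic_abs p a) (padic_abs p b)"
    using pa_ultra[OF pp aH bH] ab(3) by simp
  have ua: "padic_abs p a / x \<le> pnorm p f" using N_upper[OF pp Kf xh(2) ab(1)] .
  have ub: "padic_abs p b / x \<le> pnorm p g" using N_upper[OF pp Kg xh(2) ab(2)] .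
  have "z \<le> pnorm p f \<or> z \<le> pnorm p g"
  proof (cases "padic_abs p a \<le> padic_abs p b")
    case True
    then have "padic_abs p h \<le> padic_abs p b" using ul by simp
    then have "padic_abs p h / x \<le> padic_abs p b / x" using xh(2) by (rule divide_right_mono[OF _ less_imp_le])
    then show ?thesis using ub xh(1) by simp
  next
    case False
    then have "padic_abs p h \<le> padic_abs p a" using ul by simp
    then have "padic_abs p h / x \<le> padic_abs p a / x" using xh(2) by (rule divide_right_mono[OF _ less_imp_le])
    then show ?thesis using ua xh(1) by simp
  qed
  then show "z \<le> max (Sup (N p f)) (Sup (N p g))" unfolding pnorm_N by linarith
qed

lemma Sup_scale:
  fixes X :: "real set"
  assumes q: "q > 0" and ne: "X \<noteq> {}" and bdd: "bdd_above X"
  shows "Sup ((\<lambda>z. q * z) ` X) = q * Sup X"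
proof (rule antisym)
  show "Sup ((\<lambda>z. q * z) ` X) \<le> q * Sup X"
  proof (rule cSup_least)
    show "(\<lambda>z. q * z) ` X \<noteq> {}" using ne by simp
    fix y assume "y \<in> (\<lambda>z. q * z) ` X"
    then obtain z where z: "z \<in> X" "y = q * z" by blast
    have "z \<le> Sup X" using cSup_upper[OF z(1) bdd] .
    then show "y \<le> q * Sup X" using z(2) q by (simp add: mult_left_mono)
  qed
  have bdd2: "bdd_above ((\<lambda>z. q * z) ` X)"
    unfolding bdd_above_def
  proof (intro exI[of _ "q * Sup X"] ballI)
    fix y assume "y \<in> (\<lambda>z. q * z) ` X"
    then obtain z where z: "z \<in> X" "y = q * z" by blast
    have "z \<le> Sup X" using cSup_upper[OF z(1) bdd] .
    then show "y \<le> q * Sup X" using z(2) q by (simp add: mult_left_mono)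
  qed
  have "Sup X \<le> Sup ((\<lambda>z. q * z) ` X) / q"
  proof (rule cSup_least[OF ne])
    fix z assume z: "z \<in> X"
    have "q * z \<le> Sup ((\<lambda>z. q * z) ` X)" using cSup_upper[OF _ bdd2] z by blast
    then show "z \<le> Sup ((\<lambda>z. q * z) ` X) / q" using q by (simp add: pos_le_divide_eq mult.commute)
  qed
  then show "q * Sup X \<le> Sup ((\<lambda>z. q * z) ` X)" using q by (simp add: pos_le_divide_eq mult.commute)
qed

lemma slopes_cmult:
  assumes K: "K_real p f" and x: "x > 0"
  shows "slopes (\<lambda>t. c * f t) x = (\<lambda>h. c * h) ` slopes f x"
proof -
  obtain r where r: "Rg f x r" using K_Rg[OF K x] by blast
  obtain l where l: "Lf f x l" using K_Lf[OF K x] by blast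
  have "slopes f x = {l, r}" using slopes_un Rg_slopes[OF r] Lf_slopes[OF l] by auto
  moreover have "slopes (\<lambda>t. c * f t) x = {c * l, c * r}"
    using slopes_un Rg_slopes[OF Rg_cmult[OF r]] Lf_slopes[OF Lf_cmult[OF l]] by auto
  ultimately show ?thesis by simp
qed

lemma part3:
  assumes pp: "prime p" and K: "K_real p f"
  shows "pnorm p (\<lambda>x. real p powi a * f x) = real p powi (- a) * pnorm p f"
proof -
  have p0: "real p > 0" using p_gt1[OF pp] by simp
  have "N p (\<lambda>x. real p powi a * f x) = (\<lambda>z. real p powi (- a) * z) ` N p f"
  proof
    show "N p (\<lambda>x. real p powi a * f x) \<subseteq> (\<lambda>z. real p powi (- a) * z) ` N p f"
    proof
      fix z assume "z \<in> N p (\<lambda>x. real p powi a * f x)"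
      then obtain x h where xh: "z = padic_abs p h / x" "0 < x" "h \<in> slopes (\<lambda>x. real p powi a * f x) x"
        unfolding N_def by blast
      then obtain h0 where h0: "h0 \<in> slopes f x" "h = real p powi a * h0"
        using slopes_cmult[OF K xh(2)] by blast
      have hH: "h0 \<in> HP p" using Hp_HP[OF pp slopes_Hp[OF K xh(2) h0(1)]] .
      have "padic_abs p h = real p powi (- a) * padic_abs p h0"
        using HP_mult[OF pp hH, of a] h0(2) by (simp add: mult.commute)
      then have "z = real p powi (- a) * (padic_abs p h0 / x)" using xh(1) by simp
      moreover have "padic_abs p h0 / x \<in> N p f" using h0(1) xh(2) unfolding N_def by blast
      ultimately show "z \<in> (\<lambda>z. real p powi (- a) * z) ` N p f" by blast
    qed
    show "(\<lambda>z. real p powi (- a) * z) ` N p f \<subseteq> N p (\<lambda>x. real p powi a * f x)"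
    proof
      fix z assume "z \<in> (\<lambda>z. real p powi (- a) * z) ` N p f"
      then obtain x h0 where xh: "z = real p powi (- a) * (padic_abs p h0 / x)" "0 < x" "h0 \<in> slopes f x"
        unfolding N_def by blast
      have hH: "h0 \<in> HP p" using Hp_HP[OF pp slopes_Hp[OF K xh(2) xh(3)]] .
      have "padic_abs p (real p powi a * h0) = real p powi (- a) * padic_abs p h0"
        using HP_mult[OF pp hH, of a] by (simp add: mult.commute)
      then have "z = padic_abs p (real p powi a * h0) / x" using xh(1) by simp
      moreover have "real p powi a * h0 \<in> slopes (\<lambda>x. real p powi a * f x) x"
        using slopes_cmult[OF K xh(2)] xh(3) by blast
      ultimately show "z \<in> N p (\<lambda>x. real p powi a * f x)" using xh(2) unfolding N_def by blast
    qed
  qed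
  then show ?thesis
    unfolding pnorm_N using Sup_scale[OF _ N_ne[OF K] N_bdd[OF pp K], of "real p powi (- a)"] p0 by simp
qed

lemma Lf_inner:
  assumes L: "Lf f x s" and x: "1 < x"
  shows "\<exists>y. 1 < y \<and> y < x \<and> Lf f y s"
proof -
  obtain d where d: "d > 0" "\<forall>t\<in>{x-d..x}. f t = f x + s * (t - x)" using L unfolding Lf_def by blast
  define y where "y = max (x - d / 2) ((1 + x) / 2)"
  have y: "1 < y" "y < x" "x - d < y" using d x unfolding y_def
    by (simp_all add: less_max_iff_disj max_less_iff_conj)
  have "Lf f y s" unfolding Lf_def
  proof (intro exI[of _ "y - (x - d)"] conjI ballI)
    show "y - (x - d) > 0" using y by simp
    fix t assume t: "t \<in> {y - (y - (x - d))..y}"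
    have t1: "t \<in> {x-d..x}" using t y by auto
    have y1: "y \<in> {x-d..x}" using y by auto
    have "f t = f x + s * (t - x)" using d(2) t1 by blast
    moreover have "f y = f x + s * (y - x)" using d(2) y1 by blast
    ultimately show "f t = f y + s * (t - y)" by (simp add: algebra_simps)
  qed
  then show ?thesis using y by blast
qed

lemma part4:
  assumes pp: "prime p" and K: "K_real p f"
  shows "pnorm p f \<le> 1 \<longleftrightarrow>
         (\<forall>x\<in>{1..<real p}. right_slopes f x \<subseteq> \<int>) \<and>
         (\<forall>x\<in>{1<..real p}. left_slopes f x \<subseteq> \<int>)"
proof
  assume le: "pnorm p f \<le> 1"
  have key: "s \<in> \<int>" if "Rg f y s \<or> Lf f y s" "1 \<le> y" "y < real p" "s \<in> Hp p" for y s
  proof -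
    have y0: "y > 0" using that by simp
    have "s \<in> slopes f y" using that(1) Rg_ex_slopes Lf_ex_slopes by blast
    then have "padic_abs p s / y \<le> 1" using N_upper[OF pp K y0] le by force
    then have "padic_abs p s \<le> y" using y0 by (simp add: pos_divide_le_eq)
    then have "padic_abs p s < real p" using that by simp
    then show ?thesis using HP_int[OF pp Hp_HP[OF pp that(4)]] by blast
  qed
  have r: "right_slopes f x \<subseteq> \<int>" if x: "x \<in> {1..<real p}" for x
  proof -
    obtain s where s: "s \<in> Hp p" "Rg f x s" using K_Rg[OF K, of x] x by auto
    then show ?thesis using key[of x s] x Rg_slopes[OF s(2)] by auto
  qed
  have l: "left_slopes f x \<subseteq> \<int>" if x: "x \<in> {1<..real p}" for x
  proof -
    obtain s where s: "s \<in> Hp p" "Lf f x s" using K_Lf[OF K, of x] x by auto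
    obtain y where y: "1 < y" "y < x" "Lf f y s" using Lf_inner[OF s(2)] x by auto
    have "s \<in> \<int>" using key[of y s] y x s by auto
    then show ?thesis using Lf_slopes[OF s(2)] by auto
  qed
  show "(\<forall>x\<in>{1..<real p}. right_slopes f x \<subseteq> \<int>) \<and> (\<forall>x\<in>{1<..real p}. left_slopes f x \<subseteq> \<int>)"
    using r l by blast
next
  assume A: "(\<forall>x\<in>{1..<real p}. right_slopes f x \<subseteq> \<int>) \<and> (\<forall>x\<in>{1<..real p}. left_slopes f x \<subseteq> \<int>)"
  show "pnorm p f \<le> 1" unfolding pnorm_N
  proof (rule cSup_least[OF N_ne[OF K]])
    fix z assume "z \<in> N p f"
    then obtain x h where xh: "z = padic_abs p h / x" "0 < x" "h \<in> slopes f x" unfolding N_def by blast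
    obtain y s where ys: "s \<in> HP p" "padic_abs p h / x = padic_abs p s / y"
      "(1 \<le> y \<and> y < real p \<and> Rg f y s) \<or> (1 < y \<and> y \<le> real p \<and> Lf f y s)"
      using N_repr[OF pp K xh(2,3)] by blast
    have sZ: "s \<in> \<int>"
      using ys(3)
    proof
      assume h: "1 \<le> y \<and> y < real p \<and> Rg f y s"
      then have "y \<in> {1..<real p}" by simp
      then have "right_slopes f y \<subseteq> \<int>" using A by blast
      then show ?thesis using Rg_slopes[of f y s] h by simp
    next
      assume h: "1 < y \<and> y \<le> real p \<and> Lf f y s"
      then have "y \<in> {1<..real p}" by simp
      then have "left_slopes f y \<subseteq> \<int>" using A by blast
      then show ?thesis using Lf_slopes[of f y s] h by simp
    qed
    then obtain n where n: "s = real_of_int n" by (auto elim: Ints_cases)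
    have s1: "padic_abs p s \<le> 1" using int_pa_le1[OF pp] n by simp
    have y1: "1 \<le> y" using ys(3) by auto
    have "padic_abs p s / y \<le> padic_abs p s / 1"
      using y1 pa_nonneg[OF pp] by (intro divide_left_mono) auto
    then show "z \<le> 1" using s1 xh(1) ys(2) by simp
  qed
qed

lemma pdiv_max:
  assumes Kf: "K_real p f" and Kg: "K_real p g" and H: "H \<in> Cp p"
  shows "min (pdiv p f H) (pdiv p g H) \<le> pdiv p (\<lambda>x. max (f x) (g x)) H"
proof -
  obtain l where l: "l > 0" "\<And>F. pdiv p F H = hplus F l - hminus F l" using pdiv_l[OF H] by blast
  obtain a where a: "Rg f l a" using K_Rg[OF Kf l(1)] by blast
  obtain b where b: "Rg g l b" using K_Rg[OF Kg l(1)] by blast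
  obtain a' where a': "Lf f l a'" using K_Lf[OF Kf l(1)] by blast
  obtain b' where b': "Lf g l b'" using K_Lf[OF Kg l(1)] by blast
  obtain s where s: "Rg (\<lambda>t. max (f t) (g t)) l s" "g l < f l \<longrightarrow> s = a" "f l < g l \<longrightarrow> s = b"
    "f l = g l \<longrightarrow> s = max a b" using Rg_max[OF a b] by blast
  obtain s' where s': "Lf (\<lambda>t. max (f t) (g t)) l s'" "g l < f l \<longrightarrow> s' = a'" "f l < g l \<longrightarrow> s' = b'"
    "f l = g l \<longrightarrow> s' = min a' b'" using Lf_max[OF a' b'] by blast
  have pf: "pdiv p f H = l * a - l * a'" using l hplus_Rg[OF l(1) a] hminus_Lf[OF l(1) a'] by simp
  have pg: "pdiv p g H = l * b - l * b'" using l hplus_Rg[OF l(1) b] hminus_Lf[OF l(1) b'] by simp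
  have pm: "pdiv p (\<lambda>x. max (f x) (g x)) H = l * s - l * s'"
    using l hplus_Rg[OF l(1) s(1)] hminus_Lf[OF l(1) s'(1)] by simp
  consider (gt) "g l < f l" | (lt) "f l < g l" | (eq) "f l = g l" by linarith
  then show ?thesis
  proof cases
    case gt then show ?thesis using s s' pf pm by simp
  next
    case lt then show ?thesis using s s' pg pm by simp
  next
    case eq
    have "a \<le> s" "s' \<le> a'" using eq s(4) s'(4) by auto
    then have "l * a \<le> l * s" "l * s' \<le> l * a'" using l(1) by (auto intro: mult_left_mono)
    then have "pdiv p f H \<le> pdiv p (\<lambda>x. max (f x) (g x)) H" using pf pm by simp
    then show ?thesis by simp
  qed
qed

lemma pdiv_addc: "pdiv p (\<lambda>x. f x + c) H = pdiv p f H"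
  by (simp add: pdiv_def hplus_def hminus_def)

lemma slopes_addc: "slopes (\<lambda>x. f x + c) x = slopes f x"
  by (simp add: slopes_def has_field_derivative_iff)

lemma pnorm_addc: "pnorm p (\<lambda>x. f x + c) = pnorm p f"
  by (simp add: pnorm_def slopes_addc)



lemma H0rho_Some: "Some h \<in> H0rho p D \<rho> \<longleftrightarrow> K_real p h \<and> (\<forall>H\<in>Cp p. D H + pdiv p h H \<ge> 0) \<and> pnorm p h \<le> \<rho>"
  by (auto simp: H0rho_def H0_def)

lemma H0rho_None: "None \<in> H0rho p D \<rho>"
  by (simp add: H0rho_def H0_def)

lemma H0_Some: "Some h \<in> H0 p D \<longleftrightarrow> K_real p h \<and> (\<forall>H\<in>Cp p. D H + pdiv p h H \<ge> 0)"
  by (auto simp: H0_def)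

lemma submod:
  assumes pp: "prime p"
  shows "Rmax_submodule (H0rho p D \<rho>)"
proof -
  have ks: "Ksup x y \<in> H0rho p D \<rho>" if x: "x \<in> H0rho p D \<rho>" and y: "y \<in> H0rho p D \<rho>" for x y
  proof (cases x)
    case None then show ?thesis using y by simp
  next
    case (Some f)
    show ?thesis
    proof (cases y)
      case None then show ?thesis using x Some by simp
    next
      case Some2: (Some g)
      have f: "K_real p f" "\<forall>H\<in>Cp p. D H + pdiv p f H \<ge> 0" "pnorm p f \<le> \<rho>"
        using x Some H0rho_Some by blast+
      have g: "K_real p g" "\<forall>H\<in>Cp p. D H + pdiv p g H \<ge> 0" "pnorm p g \<le> \<rho>"
        using y Some2 H0rho_Some by blast+
      have K: "K_real p (\<lambda>x. max (f x) (g x))" using K_max[OF f(1) g(1)] .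
      have dv: "\<forall>H\<in>Cp p. D H + pdiv p (\<lambda>x. max (f x) (g x)) H \<ge> 0"
      proof
        fix H assume H: "H \<in> Cp p"
        have "min (pdiv p f H) (pdiv p g H) \<le> pdiv p (\<lambda>x. max (f x) (g x)) H"
          using pdiv_max[OF f(1) g(1) H] .
        moreover have "D H + pdiv p f H \<ge> 0" "D H + pdiv p g H \<ge> 0" using f(2) g(2) H by blast+
        ultimately show "D H + pdiv p (\<lambda>x. max (f x) (g x)) H \<ge> 0" by linarith
      qed
      have nm: "pnorm p (\<lambda>x. max (f x) (g x)) \<le> \<rho>"
        using part1[OF pp f(1) g(1)] f(3) g(3) by linarith
      show ?thesis using K dv nm Some Some2 H0rho_Some by simp
    qed
  qed
  have km: "Ksmult c x \<in> H0rho p D \<rho>" if x: "x \<in> H0rho p D \<rho>" for c x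
  proof (cases c)
    case None then show ?thesis using H0rho_None by simp
  next
    case (Some c0)
    show ?thesis
    proof (cases x)
      case None then show ?thesis using Some H0rho_None by simp
    next
      case Some2: (Some f)
      have f: "K_real p f" "\<forall>H\<in>Cp p. D H + pdiv p f H \<ge> 0" "pnorm p f \<le> \<rho>"
        using x Some2 H0rho_Some by blast+
      have "Some (\<lambda>x. f x + c0) \<in> H0rho p D \<rho>"
        using K_addc[OF f(1)] f(2,3) unfolding H0rho_Some pdiv_addc pnorm_addc by blast
      then show ?thesis using Some Some2 by simp
    qed
  qed
  show ?thesis unfolding Rmax_submodule_def using H0rho_None ks km by blast
qed

lemma part5:
  assumes pp: "prime p"
  shows "(\<forall>\<rho>>0. H0rho p D \<rho> \<subseteq> H0 p D \<and> Rmax_submodule (H0rho p D \<rho>))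
       \<and> (\<forall>\<rho> \<rho>'. 0 < \<rho> \<longrightarrow> \<rho> \<le> \<rho>' \<longrightarrow> H0rho p D \<rho> \<subseteq> H0rho p D \<rho>')
       \<and> (\<Union>\<rho>\<in>{0<..}. H0rho p D \<rho>) = H0 p D"
proof (intro conjI allI impI)
  show "H0rho p D \<rho> \<subseteq> H0 p D" for \<rho> by (auto simp: H0rho_def)
  show "Rmax_submodule (H0rho p D \<rho>)" for \<rho> using submod[OF pp] .
  show "H0rho p D \<rho> \<subseteq> H0rho p D \<rho>'" if "\<rho> \<le> \<rho>'" for \<rho> \<rho>'
    using that by (auto simp: H0rho_def split: option.splits)
  show "(\<Union>\<rho>\<in>{0<..}. H0rho p D \<rho>) = H0 p D"
  proof
    show "(\<Union>\<rho>\<in>{0<..}. H0rho p D \<rho>) \<subseteq> H0 p D" by (auto simp: H0rho_def)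
    show "H0 p D \<subseteq> (\<Union>\<rho>\<in>{0<..}. H0rho p D \<rho>)"
    proof
      fix x assume x: "x \<in> H0 p D"
      show "x \<in> (\<Union>\<rho>\<in>{0<..}. H0rho p D \<rho>)"
      proof (cases x)
        case None
        then have "x \<in> H0rho p D 1" using H0rho_None by simp
        then show ?thesis by force
      next
        case (Some f)
        have "x \<in> H0rho p D (max 1 (pnorm p f))" using x Some by (simp add: H0rho_def)
        moreover have "max 1 (pnorm p f) \<in> {0<..}" by simp
        ultimately show ?thesis by blast
      qed
    qed
  qed
qed

theorem proposition5p15:
  fixes p :: nat and f g :: "real \<Rightarrow> real"
  assumes "prime p" and "K_real p f" and "K_real p g"
  shows "pnorm p (\<lambda>x. max (f x) (g x)) \<le> max (pnorm p f) (pnorm p g)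
    \<and> pnorm p (\<lambda>x. f x + g x) \<le> max (pnorm p f) (pnorm p g)
    \<and> (\<forall>a::int. pnorm p (\<lambda>x. real p powi a * f x) = real p powi (- a) * pnorm p f)
    \<and> (pnorm p f \<le> 1 \<longleftrightarrow>
         (\<forall>x\<in>{1..<real p}. right_slopes f x \<subseteq> \<int>) \<and>
         (\<forall>x\<in>{1<..real p}. left_slopes f x \<subseteq> \<int>))
    \<and> (\<forall>D\<in>Div p.
         (\<forall>\<rho>>0. H0rho p D \<rho> \<subseteq> H0 p D \<and> Rmax_submodule (H0rho p D \<rho>))
       \<and> (\<forall>\<rho> \<rho>'. 0 < \<rho> \<longrightarrow> \<rho> \<le> \<rho>' \<longrightarrow> H0rho p D \<rho> \<subseteq> H0rho p D \<rho>')
       \<and> (\<Union>\<rho>\<in>{0<..}. H0rho p D \<rho>) = H0 p D)"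
  using part1[OF assms] part2[OF assms] part3[OF assms(1,2)] part4[OF assms(1,2)] part5[OF assms(1)]
  by blast


end
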